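(* For any $X$-free ordered graph $(H,\prec)$, the graph $H$ contains no subdivision of $B_4$ as an induced subgraph.
   Context: An ordered graph is a pair $(H,\prec)$ with $H$ a finite graph and $\prec$ a linear order on $V(H)$. $X$ denotes the ordered graph on vertices $a\prec b\prec c\prec d$ with edge set exactly $\{ac,bd\}$; an ordered graph is $X$-free if no four of its vertices induce (with the restricted order) a copy of $X$. $B_4$ is the graph on vertices $s,t,x_1,x_2,x_3,y_1,y_2,y_3,z_1,z_2,z_3$ formed by the three internally disjoint paths $s x_1 x_2 x_3 t$, $s y_1 y_2 y_3 t$, $s z_1 z_2 z_3 t$ (each with $4$ edges) and no other edges. A subdivision of a graph $F$ is a graph obtained from $F$ by replacing edges of $F$ with internally disjoint paths between their ends. *)

theory Defs
  imports Main
begin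

definition ordered_graph :: "'a set \<Rightarrow> ('a \<Rightarrow> 'a \<Rightarrow> bool) \<Rightarrow> ('a \<Rightarrow> 'a \<Rightarrow> bool) \<Rightarrow> bool" where
  "ordered_graph V E lt \<longleftrightarrow>
     finite V \<and> (\<forall>x y. E x y \<longrightarrow> x \<in> V \<and> y \<in> V) \<and> (\<forall>x y. E x y \<longrightarrow> E y x) \<and> (\<forall>x. \<not> E x x)
     \<and> (\<forall>x\<in>V. \<not> lt x x)
     \<and> (\<forall>x\<in>V. \<forall>y\<in>V. \<forall>z\<in>V. lt x y \<longrightarrow> lt y z \<longrightarrow> lt x z)
     \<and> (\<forall>x\<in>V. \<forall>y\<in>V. x \<noteq> y \<longrightarrow> lt x y \<or> lt y x)"

definition X_free :: "'a set \<Rightarrow> ('a \<Rightarrow> 'a \<Rightarrow> bool) \<Rightarrow> ('a \<Rightarrow> 'a \<Rightarrow> bool) \<Rightarrow> bool" where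
  "X_free V E lt \<longleftrightarrow>
     \<not> (\<exists>a b c d. a \<in> V \<and> b \<in> V \<and> c \<in> V \<and> d \<in> V \<and> lt a b \<and> lt b c \<and> lt c d \<and>
          E a c \<and> E b d \<and> \<not> E a b \<and> \<not> E a d \<and> \<not> E b c \<and> \<not> E c d)"

definition path_adj :: "'a list \<Rightarrow> 'a \<Rightarrow> 'a \<Rightarrow> bool" where
  "path_adj p x y \<longleftrightarrow>
     (\<exists>i. Suc i < length p \<and> ((p ! i = x \<and> p ! Suc i = y) \<or> (p ! i = y \<and> p ! Suc i = x)))"

text \<open>The graph (V,E) contains, as an induced subgraph, a subdivision of the graph F with
  vertex set VF and edge set EF (each undirected edge of F listed once as an ordered pair):
  branch vertices phi v, and for every edge (u,v) of F a path P (u,v) in the host graph from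
  phi u to phi v, with internal vertices avoiding branch vertices and pairwise disjoint
  between different edges; the subgraph induced on all these vertices has exactly the path
  edges.\<close>
definition induced_subdivision ::
  "'a set \<Rightarrow> ('a \<Rightarrow> 'a \<Rightarrow> bool) \<Rightarrow> 'b set \<Rightarrow> ('b \<times> 'b) set \<Rightarrow> bool" where
  "induced_subdivision V E VF EF \<longleftrightarrow>
     (\<exists>(phi :: 'b \<Rightarrow> 'a) (P :: 'b \<times> 'b \<Rightarrow> 'a list).
        inj_on phi VF \<and> phi ` VF \<subseteq> V \<and>
        (\<forall>e\<in>EF. distinct (P e) \<and> length (P e) \<ge> 2 \<and> set (P e) \<subseteq> V \<and>
                 hd (P e) = phi (fst e) \<and> last (P e) = phi (snd e) \<and>
                 (\<forall>i. Suc i < length (P e) \<longrightarrow> E (P e ! i) (P e ! Suc i)) \<and>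
                 set (butlast (tl (P e))) \<inter> phi ` VF = {}) \<and>
        (\<forall>e\<in>EF. \<forall>e'\<in>EF. e \<noteq> e' \<longrightarrow> set (butlast (tl (P e))) \<inter> set (butlast (tl (P e'))) = {}) \<and>
        (let S = phi ` VF \<union> (\<Union>e\<in>EF. set (P e)) in
          \<forall>x\<in>S. \<forall>y\<in>S. E x y \<longleftrightarrow> (\<exists>e\<in>EF. path_adj (P e) x y)))"

text \<open>B_4: s = 0, t = 1; paths s x1 x2 x3 t = 0-2-3-4-1, s y1 y2 y3 t = 0-5-6-7-1,
  s z1 z2 z3 t = 0-8-9-10-1.\<close>
definition B4_vertices :: "nat set" where
  "B4_vertices = {0..10}"

definition B4_edges :: "(nat \<times> nat) set" where
  "B4_edges = {(0,2),(2,3),(3,4),(4,1), (0,5),(5,6),(6,7),(7,1), (0,8),(8,9),(9,10),(10,1)}"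

end

theory Submission
  imports Defs
begin

definition VSet :: "(nat \<Rightarrow> nat \<Rightarrow> 'a) \<Rightarrow> (nat \<Rightarrow> nat) \<Rightarrow> 'a set" where
  "VSet v k = {v j i |j i. j < 3 \<and> i \<le> Suc (k j)}"

fun wk :: "('a \<Rightarrow> 'a \<Rightarrow> bool) \<Rightarrow> 'a list \<Rightarrow> bool" where
  "wk E (a # b # xs) = (E a b \<and> wk E (b # xs))"
| "wk E _ = True"

definition btw :: "('a \<Rightarrow> int) \<Rightarrow> 'a \<Rightarrow> 'a \<Rightarrow> 'a \<Rightarrow> bool" where
  "btw r a u b = (r a < r u \<and> r u < r b \<or> r b < r u \<and> r u < r a)"

lemma wk_Cons: "wk E (a # w) = (w = [] \<or> (E a (hd w) \<and> wk E w))"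
  by (cases w) auto

lemma wk_append: "wk E (xs @ ys) = (wk E xs \<and> wk E ys \<and> (xs \<noteq> [] \<longrightarrow> ys \<noteq> [] \<longrightarrow> E (last xs) (hd ys)))"
  by (induction xs) (auto simp: wk_Cons)

lemma wk_nth: "wk E w \<Longrightarrow> Suc i < length w \<Longrightarrow> E (w ! i) (w ! Suc i)"
proof (induction w arbitrary: i)
  case Nil then show ?case by simp
next
  case (Cons a w)
  then show ?case by (cases i) (auto simp: wk_Cons hd_conv_nth)
qed

lemma cover:
  assumes "wk E w" "\<forall>x\<in>set w. r x \<noteq> r q" "x \<in> set w" "y \<in> set w" "r x < r q" "r q < r y"
  shows "\<exists>i. Suc i < length w \<and> btw r (w ! i) q (w ! Suc i)"
  using assms
proof (induction w arbitrary: x y)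
  case Nil then show ?case by simp
next
  case (Cons a w)
  show ?case
  proof (cases w)
    case Nil then show ?thesis using Cons.prems by auto
  next
    case (Cons b w')
    show ?thesis
    proof (cases "btw r a q b")
      case True then show ?thesis using Cons by auto
    next
      case False
      have ab: "r a \<noteq> r q" "r b \<noteq> r q" using Cons.prems(2) \<open>w = b # w'\<close> by auto
      have side: "(r a < r q \<and> r b < r q) \<or> (r q < r a \<and> r q < r b)"
        using False ab by (auto simp: btw_def)
      have "\<exists>x'\<in>set w. r x' < r q" using Cons.prems side \<open>w = b # w'\<close> by auto
      moreover have "\<exists>y'\<in>set w. r q < r y'" using Cons.prems side \<open>w = b # w'\<close> by auto
      ultimately obtain x' y' where "x' \<in> set w" "y' \<in> set w" "r x' < r q" "r q < r y'" by blast
      moreover have "wk E w" using Cons.prems(1) \<open>w = b # w'\<close> by simp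
      ultimately obtain i where "Suc i < length w" "btw r (w ! i) q (w ! Suc i)"
        using Cons.IH Cons.prems(2) by fastforce
      then show ?thesis by (intro exI[of _ "Suc i"]) auto
    qed
  qed
qed

lemma change:
  assumes "P u" "\<not> P z" "u \<in> set w" "z \<in> set w"
  shows "\<exists>i. Suc i < length w \<and> P (w ! i) \<noteq> P (w ! Suc i)"
  using assms
proof (induction w arbitrary: u z)
  case Nil then show ?case by simp
next
  case (Cons a w)
  show ?case
  proof (cases w)
    case Nil then show ?thesis using Cons.prems by auto
  next
    case (Cons b w')
    show ?thesis
    proof (cases "P a = P b")
      case False then show ?thesis using Cons by (intro exI[of _ 0]) auto
    next
      case True
      have "\<exists>u'\<in>set w. P u'" using Cons.prems True \<open>w = b # w'\<close> by auto
      moreover have "\<exists>z'\<in>set w. \<not> P z'" using Cons.prems True \<open>w = b # w'\<close> by auto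
      ultimately obtain i where "Suc i < length w" "P (w ! i) \<noteq> P (w ! Suc i)"
        using Cons.IH by blast
      then show ?thesis by (intro exI[of _ "Suc i"]) auto
    qed
  qed
qed

lemma pigeon3:
  fixes a b c T :: int
  assumes "a \<noteq> T" "b \<noteq> T" "c \<noteq> T" "a \<noteq> b" "a \<noteq> c" "b \<noteq> c"
    "\<not> (a < b \<and> b < T \<or> T < b \<and> b < a)" "\<not> (b < a \<and> a < T \<or> T < a \<and> a < b)"
    "\<not> (a < c \<and> c < T \<or> T < c \<and> c < a)" "\<not> (c < a \<and> a < T \<or> T < a \<and> a < c)"
    "\<not> (b < c \<and> c < T \<or> T < c \<and> c < b)" "\<not> (c < b \<and> b < T \<or> T < b \<and> b < c)"
  shows False
proof (cases "a < T")
  case True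
  then show ?thesis using assms by (cases "b < T"; cases "c < T") auto
next
  case False
  then show ?thesis using assms by (cases "b < T"; cases "c < T") auto
qed

lemma pigeon3b:
  assumes "r a \<noteq> r T" "r b \<noteq> r T" "r c \<noteq> r T" "r a \<noteq> r b" "r a \<noteq> r c" "r b \<noteq> r c"
    "\<not> btw r a b T" "\<not> btw r b a T" "\<not> btw r a c T" "\<not> btw r c a T" "\<not> btw r b c T" "\<not> btw r c b T"
  shows False
  using assms unfolding btw_def by (rule pigeon3)

lemma arithA:
  fixes S T X1 X2 XM XK W :: int
  assumes d: "W \<noteq> S" "W \<noteq> T" "W \<noteq> X1" "W \<noteq> X2" "W \<noteq> XM" "W \<noteq> XK" "X2 \<noteq> S" "X2 \<noteq> T"
    "XM \<noteq> S" "XM \<noteq> T" "X1 \<noteq> T" "XK \<noteq> S" "S \<noteq> T"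
  and nb1: "\<And>a b. a \<in> {S,T,X1,X2,XM,XK} \<Longrightarrow> b \<in> {S,T,X1,X2,XM,XK} \<Longrightarrow> \<not>(a < W \<and> W < b)"
  and nb2: "\<And>q a b. q \<in> {X2,XM} \<Longrightarrow> a \<in> {S,T,W} \<Longrightarrow> b \<in> {S,T,W} \<Longrightarrow> \<not>(a < q \<and> q < b)"
  and o: "\<not>(X1 < T \<and> T < X2 \<or> X2 < T \<and> T < X1)" "\<not>(XM < S \<and> S < XK \<or> XK < S \<and> S < XM)"
    "\<not>(S < T \<and> T < X1 \<or> X1 < T \<and> T < S)" "\<not>(XK < S \<and> S < T \<or> T < S \<and> S < XK)"
  shows False
proof (cases "W < S")
  case True
  then have w: "W < T" "W < X1" "W < X2" "W < XM" "W < XK"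
    using nb1[of T S] nb1[of X1 S] nb1[of X2 S] nb1[of XM S] nb1[of XK S] d by (auto simp: linorder_not_less le_less)
  have "S < X2" "T < X2" "S < XM" "T < XM"
    using nb2[of X2 W S] nb2[of X2 W T] nb2[of XM W S] nb2[of XM W T] w d by auto
  then show False using o d by (smt (verit))
next
  case False
  then have w0: "S < W" using d(1) by (smt (verit))
  then have w: "T < W" "X1 < W" "X2 < W" "XM < W" "XK < W"
    using nb1[of S T] nb1[of S X1] nb1[of S X2] nb1[of S XM] nb1[of S XK] d by (auto simp: linorder_not_less le_less)
  have "X2 < S" "X2 < T" "XM < S" "XM < T"
    using nb2[of X2 S W] nb2[of X2 T W] nb2[of XM S W] nb2[of XM T W] w w0 d by auto
  then show False using o d by (smt (verit))
qed

locale theta =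
  fixes E :: "'a \<Rightarrow> 'a \<Rightarrow> bool" and r :: "'a \<Rightarrow> int" and v :: "nat \<Rightarrow> nat \<Rightarrow> 'a" and k :: "nat \<Rightarrow> nat"
  assumes k3: "j < 3 \<Longrightarrow> 3 \<le> k j"
  and veq: "j < 3 \<Longrightarrow> j' < 3 \<Longrightarrow> i \<le> Suc (k j) \<Longrightarrow> i' \<le> Suc (k j') \<Longrightarrow>
      (v j i = v j' i') = ((j = j' \<and> i = i') \<or> (i = 0 \<and> i' = 0) \<or> (i = Suc (k j) \<and> i' = Suc (k j')))"
  and vadj: "j < 3 \<Longrightarrow> j' < 3 \<Longrightarrow> i \<le> Suc (k j) \<Longrightarrow> i' \<le> Suc (k j') \<Longrightarrow>
      E (v j i) (v j' i') = ((j = j' \<and> (i' = Suc i \<or> i = Suc i')) \<or> (i = 0 \<and> i' = 1) \<or> (i = 1 \<and> i' = 0)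
         \<or> (i = Suc (k j) \<and> i' = k j') \<or> (i = k j \<and> i' = Suc (k j')))"
  and rinj: "x \<in> VSet v k \<Longrightarrow> y \<in> VSet v k \<Longrightarrow> r x = r y \<Longrightarrow> x = y"
  and xfree: "a \<in> VSet v k \<Longrightarrow> b \<in> VSet v k \<Longrightarrow> c \<in> VSet v k \<Longrightarrow> d \<in> VSet v k \<Longrightarrow>
      r a < r b \<Longrightarrow> r b < r c \<Longrightarrow> r c < r d \<Longrightarrow> E a c \<Longrightarrow> E b d \<Longrightarrow> E a b \<or> E a d \<or> E b c \<or> E c d"
begin

abbreviation VS where "VS \<equiv> VSet v k"

definition far :: "'a \<Rightarrow> 'a \<Rightarrow> 'a \<Rightarrow> bool" where
  "far u a b = (u \<noteq> a \<and> u \<noteq> b \<and> \<not> E u a \<and> \<not> E u b)"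

lemma VS_iff: "x \<in> VS \<longleftrightarrow> (\<exists>j i. j < 3 \<and> i \<le> Suc (k j) \<and> x = v j i)"
  unfolding VSet_def by blast

lemma vVS[simp]: "j < 3 \<Longrightarrow> i \<le> Suc (k j) \<Longrightarrow> v j i \<in> VS"
  unfolding VSet_def by blast

lemma Esym: assumes "x \<in> VS" "y \<in> VS" "E x y" shows "E y x"
proof -
  obtain j i j' i' where "j < 3" "i \<le> Suc (k j)" "x = v j i" "j' < 3" "i' \<le> Suc (k j')" "y = v j' i'"
    using assms VS_iff by metis
  then show ?thesis using assms(3) vadj by auto
qed

lemma Eirr: assumes "x \<in> VS" shows "\<not> E x x"
proof -
  obtain j i where "j < 3" "i \<le> Suc (k j)" "x = v j i" using assms VS_iff by metis
  then show ?thesis using vadj[of j j i i] by auto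
qed

lemma crossK0:
  assumes "a \<in> VS" "b \<in> VS" "E a b" "r a < r b" "p \<in> VS" "q \<in> VS" "E p q"
    "far p a b" "far q a b" "btw r a p b" "\<not> btw r a q b"
  shows False
proof -
  have "r q \<noteq> r a" "r q \<noteq> r b" using rinj assms(1,2,6,9) unfolding far_def by metis+
  then have "r q < r a \<or> r b < r q" using assms(11) assms(4) unfolding btw_def by auto
  moreover have rp: "r a < r p" "r p < r b" using assms(10,4) unfolding btw_def by auto
  moreover have n: "\<not> E p a" "\<not> E p b" "\<not> E q a" "\<not> E q b" using assms(8,9) unfolding far_def by auto
  moreover have "\<not> E a p" "\<not> E b p" "\<not> E a q" "\<not> E b q" using n Esym assms by blast+
  moreover have "E q p" using Esym assms by blast
  ultimately show False using xfree[of q a p b] xfree[of a p b q] assms by auto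
qed

lemma crossK1:
  assumes "a \<in> VS" "b \<in> VS" "E a b" "p \<in> VS" "q \<in> VS" "E p q"
    "far p a b" "far q a b" "btw r a p b \<noteq> btw r a q b"
  shows False
proof -
  have ab: "r a \<noteq> r b" using rinj assms(1,2,3) Eirr by metis
  have "E q p" using Esym assms by blast
  have fs: "far p b a" "far q b a" using assms(7,8) unfolding far_def by auto
  have bs: "btw r a x b = btw r b x a" for x unfolding btw_def by auto
  have "E b a" using Esym assms by blast
  show False
  proof (cases "r a < r b")
    case True
    show ?thesis
    proof (cases "btw r a p b")
      case True then show ?thesis using crossK0[of a b p q] assms \<open>r a < r b\<close> by auto
    next
      case False then show ?thesis using crossK0[of a b q p] assms \<open>r a < r b\<close> \<open>E q p\<close> by auto
    qed
  next
    case False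
    then have "r b < r a" using ab by auto
    show ?thesis
    proof (cases "btw r a p b")
      case True then show ?thesis using crossK0[of b a p q] assms \<open>r b < r a\<close> fs bs \<open>E b a\<close> by auto
    next
      case False then show ?thesis using crossK0[of b a q p] assms \<open>r b < r a\<close> \<open>E q p\<close> fs bs \<open>E b a\<close> by auto
    qed
  qed
qed

lemma crossK:
  assumes "a \<in> VS" "b \<in> VS" "E a b" "wk E w" "set w \<subseteq> VS" "\<forall>x\<in>set w. far x a b"
    "u \<in> set w" "z \<in> set w" "btw r a u b" "\<not> btw r a z b"
  shows False
proof -
  obtain i where i: "Suc i < length w" "btw r a (w ! i) b \<noteq> btw r a (w ! Suc i) b"
    using change[of "\<lambda>x. btw r a x b" u z w] assms by blast
  have "w ! i \<in> set w" "w ! Suc i \<in> set w" using i(1) by auto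
  moreover then have "w ! i \<in> VS" "w ! Suc i \<in> VS" using assms(5) by auto
  ultimately show False using crossK1[of a b "w ! i" "w ! Suc i"] assms i wk_nth[OF assms(4) i(1)] by auto
qed


lemma wk_tl: "wk E (x # w) \<Longrightarrow> wk E w"
  by (cases w) auto

lemma wk_app2: "wk E xs \<Longrightarrow> wk E ys \<Longrightarrow> (xs \<noteq> [] \<Longrightarrow> ys \<noteq> [] \<Longrightarrow> E (last xs) (hd ys)) \<Longrightarrow> wk E (xs @ ys)"
  by (simp add: wk_append)

lemma wk_join: "wk E w1 \<Longrightarrow> wk E w2 \<Longrightarrow> w1 \<noteq> [] \<Longrightarrow> w2 \<noteq> [] \<Longrightarrow> last w1 = hd w2 \<Longrightarrow> wk E (w1 @ tl w2)"
proof -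
  assume a: "wk E w1" "wk E w2" "w1 \<noteq> []" "w2 \<noteq> []" "last w1 = hd w2"
  then obtain h t where h: "w2 = h # t" by (cases w2) auto
  have "wk E t" using a(2) h wk_tl by blast
  moreover have "t \<noteq> [] \<Longrightarrow> E h (hd t)" using a(2) h by (cases t) auto
  ultimately show ?thesis using a h by (intro wk_app2) auto
qed

lemma wk_rev: "wk E w \<Longrightarrow> set w \<subseteq> VS \<Longrightarrow> wk E (rev w)"
proof (induction w)
  case Nil then show ?case by simp
next
  case (Cons a w)
  then have "wk E w" using wk_tl by blast
  then have 1: "wk E (rev w)" using Cons by auto
  have 2: "E (hd w) a" if "w \<noteq> []"
  proof -
    obtain b w' where bw: "w = b # w'" using \<open>w \<noteq> []\<close> by (cases w) auto
    have "E a b" using Cons.prems(1) bw by simp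
    moreover have "a \<in> VS" "b \<in> VS" using Cons.prems(2) bw by auto
    ultimately show ?thesis using Esym bw by simp
  qed
  have "rev (a # w) = rev w @ [a]" by simp
  moreover have "wk E (rev w @ [a])" using 1 2 by (intro wk_app2) (auto simp: last_rev)
  ultimately show ?case by simp
qed

definition conn :: "'a \<Rightarrow> 'a \<Rightarrow> 'a \<Rightarrow> 'a \<Rightarrow> bool" where
  "conn a b u z = (\<exists>w. w \<noteq> [] \<and> wk E w \<and> set w \<subseteq> VS \<and> (\<forall>x\<in>set w. far x a b) \<and> hd w = u \<and> last w = z)"

lemma conn_sym: "conn a b u z \<Longrightarrow> conn a b z u"
proof -
  assume "conn a b u z"
  then obtain w where w: "w \<noteq> []" "wk E w" "set w \<subseteq> VS" "\<forall>x\<in>set w. far x a b" "hd w = u" "last w = z"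
    unfolding conn_def by blast
  have "rev w \<noteq> []" "wk E (rev w)" "set (rev w) \<subseteq> VS" "\<forall>x\<in>set (rev w). far x a b"
    "hd (rev w) = z" "last (rev w) = u"
    using w wk_rev[OF w(2) w(3)] by (simp_all add: hd_rev last_rev)
  then show ?thesis unfolding conn_def by blast
qed

lemma conn_trans: "conn a b u y \<Longrightarrow> conn a b y z \<Longrightarrow> conn a b u z"
proof -
  assume "conn a b u y" "conn a b y z"
  then obtain w1 w2 where w: "w1 \<noteq> []" "wk E w1" "set w1 \<subseteq> VS" "\<forall>x\<in>set w1. far x a b" "hd w1 = u" "last w1 = y"
    "w2 \<noteq> []" "wk E w2" "set w2 \<subseteq> VS" "\<forall>x\<in>set w2. far x a b" "hd w2 = y" "last w2 = z"
    unfolding conn_def by blast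
  have st: "set (tl w2) \<subseteq> set w2" by (cases w2) auto
  have l: "last (w1 @ tl w2) = z" using w by (cases w2) auto
  have wk: "wk E (w1 @ tl w2)" using wk_join[OF w(2) w(8) w(1) w(7)] w(6) w(11) by simp
  have "set (w1 @ tl w2) \<subseteq> VS" using st w(3,9) by auto
  moreover have "\<forall>x\<in>set (w1 @ tl w2). far x a b" using st w(4,10) by auto
  moreover have "hd (w1 @ tl w2) = u" using w(1,5) by simp
  moreover have "w1 @ tl w2 \<noteq> []" using w(1) by simp
  ultimately show ?thesis unfolding conn_def using wk l by blast
qed

definition pw :: "nat \<Rightarrow> nat \<Rightarrow> nat \<Rightarrow> 'a list" where
  "pw j lo hi = map (v j) [lo..<Suc hi]"

lemma wk_pw: "j < 3 \<Longrightarrow> hi \<le> Suc (k j) \<Longrightarrow> wk E (pw j lo hi)"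
proof (induction hi)
  case 0 then show ?case by (cases lo) (auto simp: pw_def)
next
  case (Suc hi)
  show ?case
  proof (cases "lo \<le> Suc hi")
    case False then show ?thesis by (simp add: pw_def)
  next
    case True
    show ?thesis
    proof (cases "lo = Suc hi")
      case True then show ?thesis by (simp add: pw_def)
    next
      case False
      then have eq: "pw j lo (Suc hi) = pw j lo hi @ [v j (Suc hi)]" "pw j lo hi \<noteq> []"
        using True by (auto simp: pw_def)
      have "last (pw j lo hi) = v j hi" using True False by (auto simp: pw_def)
      moreover have "E (v j hi) (v j (Suc hi))" using Suc.prems vadj[of j j hi "Suc hi"] by auto
      ultimately show ?thesis using eq Suc by (auto simp: wk_append)
    qed
  qed
qed

lemma conn_path:
  assumes "j < 3" "lo \<le> hi" "hi \<le> Suc (k j)" "\<And>x. lo \<le> x \<Longrightarrow> x \<le> hi \<Longrightarrow> far (v j x) a b"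
  shows "conn a b (v j lo) (v j hi)"
  unfolding conn_def
proof (intro exI[of _ "pw j lo hi"] conjI)
  show "pw j lo hi \<noteq> []" using assms by (auto simp: pw_def)
  show "wk E (pw j lo hi)" using assms(1,3) by (rule wk_pw)
  show "set (pw j lo hi) \<subseteq> VS" "\<forall>x\<in>set (pw j lo hi). far x a b" using assms by (auto simp: pw_def)
  show "hd (pw j lo hi) = v j lo" using assms by (simp add: pw_def upt_conv_Cons del: upt_Suc)
  show "last (pw j lo hi) = v j hi" using assms by (simp add: pw_def)
qed

abbreviation s0 where "s0 \<equiv> v 0 0"
abbreviation t0 where "t0 \<equiv> v 0 (Suc (k 0))"

lemma vs: "j < 3 \<Longrightarrow> v j 0 = s0" using veq[of j 0 0 0] by auto
lemma vt: "j < 3 \<Longrightarrow> v j (Suc (k j)) = t0" using veq[of j 0 "Suc (k j)" "Suc (k 0)"] by auto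

lemma far_v:
  assumes "j < 3" "j' < 3" "i \<le> k j" "x \<le> Suc (k j')"
  shows "far (v j' x) (v j i) (v j (Suc i)) \<longleftrightarrow>
    \<not> ((j' = j \<and> x = i) \<or> (x = 0 \<and> i = 0) \<or> (x = Suc (k j') \<and> i = Suc (k j))) \<and>
    \<not> ((j' = j \<and> x = Suc i) \<or> (x = Suc (k j') \<and> Suc i = Suc (k j))) \<and>
    \<not> ((j' = j \<and> (i = Suc x \<or> x = Suc i)) \<or> (x = 0 \<and> i = 1) \<or> (x = 1 \<and> i = 0) \<or> (x = Suc (k j') \<and> i = k j) \<or> (x = k j' \<and> i = Suc (k j))) \<and>
    \<not> ((j' = j \<and> (Suc i = Suc x \<or> x = Suc (Suc i))) \<or> (x = 0 \<and> Suc i = 1) \<or> (x = Suc (k j') \<and> Suc i = k j) \<or> (x = k j' \<and> Suc i = Suc (k j)))"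
  unfolding far_def using assms
  by (simp add: veq vadj)


lemma far_same:
  assumes "j < 3" "i \<le> k j" "y \<le> Suc (k j)"
  shows "far (v j y) (v j i) (v j (Suc i)) \<longleftrightarrow> (y + 1 < i \<or> i + 2 < y)"
  unfolding far_def using assms k3[OF assms(1)] by (simp add: veq vadj) arith

lemma far_other:
  assumes "j < 3" "j' < 3" "j' \<noteq> j" "i \<le> k j" "1 \<le> y" "y \<le> k j'"
  shows "far (v j' y) (v j i) (v j (Suc i)) \<longleftrightarrow> \<not> (y = 1 \<and> i = 0) \<and> \<not> (y = k j' \<and> i = k j)"
  unfolding far_def using assms k3[OF assms(1)] k3[OF assms(2)] by (simp add: veq vadj)

lemma far_s: "j < 3 \<Longrightarrow> i \<le> k j \<Longrightarrow> far s0 (v j i) (v j (Suc i)) \<longleftrightarrow> 2 \<le> i"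
proof -
  assume a: "j < 3" "i \<le> k j"
  have "v j 0 = s0" using vs[OF a(1)] .
  then show ?thesis using far_same[OF a, of 0] by auto
qed

lemma far_t: "j < 3 \<Longrightarrow> i \<le> k j \<Longrightarrow> far t0 (v j i) (v j (Suc i)) \<longleftrightarrow> i + 2 \<le> k j"
proof -
  assume a: "j < 3" "i \<le> k j"
  have "v j (Suc (k j)) = t0" using vt[OF a(1)] .
  then show ?thesis using far_same[OF a, of "Suc (k j)"] a by auto
qed

lemma far_gen:
  assumes "j < 3" "j' < 3" "i \<le> k j" "y \<le> Suc (k j')"
  shows "far (v j' y) (v j i) (v j (Suc i)) \<longleftrightarrow>
     (if y = 0 then 2 \<le> i else if y = Suc (k j') then i + 2 \<le> k j
      else if j' = j then (y + 1 < i \<or> i + 2 < y) else \<not> (y = 1 \<and> i = 0) \<and> \<not> (y = k j' \<and> i = k j))"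
proof -
  consider "y = 0" | "y = Suc (k j')" | "j' = j" "y \<noteq> 0" "y \<noteq> Suc (k j')" | "j' \<noteq> j" "y \<noteq> 0" "y \<noteq> Suc (k j')"
    by blast
  then show ?thesis
  proof cases
    case 1
    then have "v j' y = s0" using vs[OF assms(2)] by simp
    then show ?thesis using far_s[OF assms(1,3)] 1 by simp
  next
    case 2
    then have "v j' y = t0" using vt[OF assms(2)] by simp
    then show ?thesis using far_t[OF assms(1,3)] 2 k3[OF assms(2)] by simp
  next
    case 3
    have "far (v j' y) (v j i) (v j (Suc i)) \<longleftrightarrow> (y + 1 < i \<or> i + 2 < y)"
      using far_same[of j i y] assms 3 by simp
    then show ?thesis using 3 by simp
  next
    case 4
    have "far (v j' y) (v j i) (v j (Suc i)) \<longleftrightarrow> \<not> (y = 1 \<and> i = 0) \<and> \<not> (y = k j' \<and> i = k j)"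
      using far_other[of j j' i y] assms 4 by simp
    then show ?thesis using 4 by simp
  qed
qed

lemma conn_hub_s:
  assumes j: "j < 3" "i \<le> k j" "2 \<le> i" and j': "j' < 3" "x \<le> Suc (k j')"
    and f: "far (v j' x) (v j i) (v j (Suc i))"
  shows "conn (v j i) (v j (Suc i)) (v j' x) s0"
proof -
  have kj: "3 \<le> k j" "3 \<le> k j'" using k3 j j' by auto
  have fx: "(if x = 0 then 2 \<le> i else if x = Suc (k j') then i + 2 \<le> k j
      else if j' = j then (x + 1 < i \<or> i + 2 < x) else \<not> (x = 1 \<and> i = 0) \<and> \<not> (x = k j' \<and> i = k j))"
    using f far_gen[OF j(1) j'(1) j(2) j'(2)] by blast
  show ?thesis
  proof (cases "j' = j \<and> Suc i < x")
    case True
    define jo where "jo = (if j = 0 then 1 else (0::nat))"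
    have jo: "jo < 3" "jo \<noteq> j" unfolding jo_def by auto
    have kjo: "3 \<le> k jo" using k3 jo by auto
    have "conn (v j i) (v j (Suc i)) (v j x) (v j (Suc (k j)))"
    proof (rule conn_path)
      fix y assume y: "x \<le> y" "y \<le> Suc (k j)"
      have "i + 2 < y" using True fx y by (auto split: if_splits)
      then show "far (v j y) (v j i) (v j (Suc i))"
        using far_same[OF j(1) j(2) y(2)] by simp
    qed (use True j' j in auto)
    moreover have "conn (v j i) (v j (Suc i)) (v jo 0) (v jo (Suc (k jo)))"
    proof (rule conn_path)
      fix y assume y: "0 \<le> y" "y \<le> Suc (k jo)"
      have "i + 2 \<le> k j" using True fx j' by (auto split: if_splits)
      then show "far (v jo y) (v j i) (v j (Suc i))"
        using far_gen[OF j(1) jo(1) j(2) y(2)] jo j(3) by auto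
    qed (use jo in auto)
    ultimately have c1: "conn (v j i) (v j (Suc i)) (v j x) t0" and c2: "conn (v j i) (v j (Suc i)) s0 t0"
      using vs[OF jo(1)] vt[OF jo(1)] vt[OF j(1)] by auto
    have "conn (v j i) (v j (Suc i)) (v j x) s0" using conn_trans[OF c1 conn_sym[OF c2]] .
    then show ?thesis using True by simp
  next
    case False
    have "conn (v j i) (v j (Suc i)) (v j' 0) (v j' x)"
    proof (rule conn_path)
      fix y assume y: "0 \<le> y" "y \<le> x"
      show "far (v j' y) (v j i) (v j (Suc i))"
      proof (cases "j' = j")
        case True
        then have "x + 1 < i" using False fx j(3) by (auto split: if_splits)
        then show ?thesis using True far_same[OF j(1) j(2), of y] y j' by auto
      next
        case ne: False
        show ?thesis using far_gen[OF j(1) j'(1) j(2), of y] y j' ne fx j(3) by (auto split: if_splits)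
      qed
    qed (use j' in auto)
    then have "conn (v j i) (v j (Suc i)) s0 (v j' x)" using vs[OF j'(1)] by simp
    then show ?thesis using conn_sym by blast
  qed
qed

lemma conn_hub_t:
  assumes j: "j < 3" "i \<le> 1" and j': "j' < 3" "x \<le> Suc (k j')"
    and f: "far (v j' x) (v j i) (v j (Suc i))"
  shows "conn (v j i) (v j (Suc i)) (v j' x) t0"
proof -
  have kj: "3 \<le> k j" "3 \<le> k j'" using k3 j j' by auto
  have ij: "i \<le> k j" using kj j by auto
  have fx: "(if x = 0 then 2 \<le> i else if x = Suc (k j') then i + 2 \<le> k j
      else if j' = j then (x + 1 < i \<or> i + 2 < x) else \<not> (x = 1 \<and> i = 0) \<and> \<not> (x = k j' \<and> i = k j))"
    using f far_gen[OF j(1) j'(1) ij j'(2)] by blast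
  have "conn (v j i) (v j (Suc i)) (v j' x) (v j' (Suc (k j')))"
  proof (rule conn_path)
    fix y assume y: "x \<le> y" "y \<le> Suc (k j')"
    show "far (v j' y) (v j i) (v j (Suc i))"
      using far_gen[OF j(1) j'(1) ij y(2)] fx y kj j(2) by (auto split: if_splits)
  qed (use j' in auto)
  then show ?thesis using vt[OF j'(1)] by simp
qed

lemma conn_all:
  assumes j: "j < 3" "i \<le> k j" and u: "u \<in> VS" "far u (v j i) (v j (Suc i))"
    and z: "z \<in> VS" "far z (v j i) (v j (Suc i))"
  shows "conn (v j i) (v j (Suc i)) u z"
proof -
  obtain j1 x1 where 1: "j1 < 3" "x1 \<le> Suc (k j1)" "u = v j1 x1" using u VS_iff by metis
  obtain j2 x2 where 2: "j2 < 3" "x2 \<le> Suc (k j2)" "z = v j2 x2" using z VS_iff by metis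
  show ?thesis
  proof (cases "2 \<le> i")
    case True
    have "conn (v j i) (v j (Suc i)) u s0" using conn_hub_s[OF j True 1(1,2)] 1 u by simp
    moreover have "conn (v j i) (v j (Suc i)) z s0" using conn_hub_s[OF j True 2(1,2)] 2 z by simp
    ultimately show ?thesis using conn_sym conn_trans by blast
  next
    case False
    then have "i \<le> 1" by auto
    have "conn (v j i) (v j (Suc i)) u t0" using conn_hub_t[OF j(1) \<open>i \<le> 1\<close> 1(1,2)] 1 u by simp
    moreover have "conn (v j i) (v j (Suc i)) z t0" using conn_hub_t[OF j(1) \<open>i \<le> 1\<close> 2(1,2)] 2 z by simp
    ultimately show ?thesis using conn_sym conn_trans by blast
  qed
qed

definition Ity where "Ity a b = (\<forall>u\<in>VS. far u a b \<longrightarrow> btw r a u b)"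
definition Oty where "Oty a b = (\<forall>u\<in>VS. far u a b \<longrightarrow> \<not> btw r a u b)"

lemma dich:
  assumes j: "j < 3" "i \<le> k j"
  shows "Ity (v j i) (v j (Suc i)) \<or> Oty (v j i) (v j (Suc i))"
proof (rule ccontr)
  assume "\<not> ?thesis"
  then obtain u z where uz: "u \<in> VS" "far u (v j i) (v j (Suc i))" "\<not> btw r (v j i) u (v j (Suc i))"
     "z \<in> VS" "far z (v j i) (v j (Suc i))" "btw r (v j i) z (v j (Suc i))"
    unfolding Ity_def Oty_def by blast
  obtain w where w: "w \<noteq> []" "wk E w" "set w \<subseteq> VS" "\<forall>x\<in>set w. far x (v j i) (v j (Suc i))"
     "hd w = z" "last w = u"
    using conn_all[OF j uz(4,5) uz(1,2)] unfolding conn_def by blast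
  have "z \<in> set w" "u \<in> set w" using w by auto
  moreover have "E (v j i) (v j (Suc i))" using vadj[of j j i "Suc i"] j by auto
  ultimately show False using crossK[of "v j i" "v j (Suc i)" w z u] w uz j by auto
qed

lemma rank_ne: "x \<in> VS \<Longrightarrow> y \<in> VS \<Longrightarrow> x \<noteq> y \<Longrightarrow> r x \<noteq> r y"
  using rinj by blast

lemma len_pw[simp]: "length (pw j lo hi) = Suc hi - lo"
  by (simp add: pw_def del: upt_Suc)

lemma nth_pw[simp]: "i < Suc hi - lo \<Longrightarrow> pw j lo hi ! i = v j (lo + i)"
  by (simp add: pw_def del: upt_Suc)

lemma set_pw: "set (pw j lo hi) = v j ` {lo..hi}"
  by (auto simp: pw_def)

lemma seg_nb:
  assumes j: "j < 3" "lo \<le> hi" "hi \<le> Suc (k j)" and q: "q \<in> VS"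
    and e: "\<And>i. lo \<le> i \<Longrightarrow> i < hi \<Longrightarrow> Oty (v j i) (v j (Suc i)) \<and> far q (v j i) (v j (Suc i))"
    and y: "lo \<le> y1" "y1 \<le> hi" "lo \<le> y2" "y2 \<le> hi"
  shows "\<not> (r (v j y1) < r q \<and> r q < r (v j y2))"
proof
  assume b: "r (v j y1) < r q \<and> r q < r (v j y2)"
  then have "lo < hi" using y by (cases "lo = hi") auto
  let ?w = "pw j lo hi"
  have ne: "\<forall>x\<in>set ?w. r x \<noteq> r q"
  proof
    fix x assume "x \<in> set ?w"
    then obtain y where yy: "lo \<le> y" "y \<le> hi" "x = v j y" by (auto simp: set_pw)
    have "x \<noteq> q"
    proof (cases "y < hi")
      case True then show ?thesis using e[of y] yy unfolding far_def by auto
    next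
      case False
      then have hy: "y = Suc (hi - 1)" using yy \<open>lo < hi\<close> by auto
      have "far q (v j (hi - 1)) (v j (Suc (hi - 1)))" using e[of "hi - 1"] \<open>lo < hi\<close> by auto
      then show ?thesis using hy yy unfolding far_def by auto
    qed
    moreover have "x \<in> VS" using yy j by auto
    ultimately show "r x \<noteq> r q" using rank_ne q by metis
  qed
  have "v j y1 \<in> set ?w" "v j y2 \<in> set ?w" using y by (auto simp: set_pw)
  then obtain i where i: "Suc i < length ?w" "btw r (?w ! i) q (?w ! Suc i)"
    using cover[OF wk_pw[OF j(1) j(3)] ne, of "v j y1" "v j y2"] b by blast
  have i2: "lo + i < hi" using i(1) by auto
  have "?w ! i = v j (lo + i)" "?w ! Suc i = v j (Suc (lo + i))" using i(1) by auto
  then have "btw r (v j (lo + i)) q (v j (Suc (lo + i)))" using i(2) by simp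
  moreover have "Oty (v j (lo + i)) (v j (Suc (lo + i)))" "far q (v j (lo + i)) (v j (Suc (lo + i)))"
    using e[of "lo + i"] i2 by auto
  ultimately show False using q unfolding Oty_def by blast
qed

lemma far_I:
  assumes "Ity a b" "Ity c d" "a \<in> VS" "b \<in> VS" "c \<in> VS" "d \<in> VS" "far c a b" "far d a b"
  shows False
proof -
  have "far a c d" "far b c d"
    using assms(3-8) Esym unfolding far_def by blast+
  then have "btw r a c b" "btw r a d b" "btw r c a d" "btw r c b d"
    using assms unfolding Ity_def by auto
  then show False unfolding btw_def by linarith
qed

lemma cross_close:
  assumes "j1 < 3" "j2 < 3" "j1 \<noteq> j2" "i1 \<le> k j1" "i2 \<le> k j2"
    and "\<not> (far (v j2 i2) (v j1 i1) (v j1 (Suc i1)) \<and> far (v j2 (Suc i2)) (v j1 i1) (v j1 (Suc i1)))"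
  shows "(i1 \<le> 1 \<and> i2 \<le> 1) \<or> (k j1 \<le> i1 + 1 \<and> k j2 \<le> i2 + 1)"
  using assms far_gen[OF assms(1) assms(2) assms(4), of i2] far_gen[OF assms(1) assms(2) assms(4), of "Suc i2"]
    k3[OF assms(1)] k3[OF assms(2)]
  by (auto split: if_splits)

lemma caseB:
  assumes O: "\<And>j i. j < 3 \<Longrightarrow> 2 \<le> i \<Longrightarrow> i \<le> k j \<Longrightarrow> Oty (v j i) (v j (Suc i))"
  shows False
proof -
  have P: "\<not> btw r (v j1 2) (v j2 2) t0" if j: "j1 < 3" "j2 < 3" "j1 \<noteq> j2" for j1 j2
  proof
    assume b: "btw r (v j1 2) (v j2 2) t0"
    have kk: "3 \<le> k j1" "3 \<le> k j2" using k3 j by auto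
    have q: "v j2 2 \<in> VS" using j kk by auto
    have e: "Oty (v j1 i) (v j1 (Suc i)) \<and> far (v j2 2) (v j1 i) (v j1 (Suc i))" if "2 \<le> i" "i < Suc (k j1)" for i
      using O[of j1 i] far_gen[of j1 j2 i 2] that j kk by auto
    have nb: "\<not> (r (v j1 y1) < r (v j2 2) \<and> r (v j2 2) < r (v j1 y2))"
      if "2 \<le> y1" "y1 \<le> Suc (k j1)" "2 \<le> y2" "y2 \<le> Suc (k j1)" for y1 y2
      by (rule seg_nb[where lo=2 and hi="Suc (k j1)", OF j(1) _ _ q e]) (use that kk in auto)
    show False using nb[of 2 "Suc (k j1)"] nb[of "Suc (k j1)" 2] b vt[OF j(1)] kk unfolding btw_def by auto
  qed
  have ne: "r (v j 2) \<noteq> r t0" if "j < 3" for j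
  proof -
    have "v j 2 \<noteq> v j (Suc (k j))" using veq[of j j 2 "Suc (k j)"] k3[OF that] that by auto
    then show ?thesis using rank_ne[of "v j 2" t0] vt[OF that] k3[OF that] that by auto
  qed
  have ne2: "r (v j1 2) \<noteq> r (v j2 2)" if "j1 < 3" "j2 < 3" "j1 \<noteq> j2" for j1 j2
  proof -
    have "v j1 2 \<noteq> v j2 2" using veq[of j1 j2 2 2] k3[OF that(1)] k3[OF that(2)] that by auto
    then show ?thesis using rank_ne[of "v j1 2" "v j2 2"] k3[OF that(1)] k3[OF that(2)] that by auto
  qed
  show False
    by (rule pigeon3b[OF ne[of 0] ne[of 1] ne[of 2] ne2[of 0 1] ne2[of 0 2] ne2[of 1 2]
      P[of 0 1] P[of 1 0] P[of 0 2] P[of 2 0] P[of 1 2] P[of 2 1]]) auto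
qed

lemma caseB':
  assumes O: "\<And>j i. j < 3 \<Longrightarrow> i + 2 \<le> k j \<Longrightarrow> Oty (v j i) (v j (Suc i))"
  shows False
proof -
  have P: "\<not> btw r (v j1 (k j1 - 1)) (v j2 (k j2 - 1)) s0" if j: "j1 < 3" "j2 < 3" "j1 \<noteq> j2" for j1 j2
  proof
    assume b: "btw r (v j1 (k j1 - 1)) (v j2 (k j2 - 1)) s0"
    have kk: "3 \<le> k j1" "3 \<le> k j2" using k3 j by auto
    have q: "v j2 (k j2 - 1) \<in> VS" using j kk by auto
    have e: "Oty (v j1 i) (v j1 (Suc i)) \<and> far (v j2 (k j2 - 1)) (v j1 i) (v j1 (Suc i))" if "0 \<le> i" "i < k j1 - 1" for i
      using O[of j1 i] far_gen[of j1 j2 i "k j2 - 1"] that j kk by auto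
    have nb: "\<not> (r (v j1 y1) < r (v j2 (k j2 - 1)) \<and> r (v j2 (k j2 - 1)) < r (v j1 y2))"
      if "y1 \<le> k j1 - 1" "y2 \<le> k j1 - 1" for y1 y2
      by (rule seg_nb[where lo=0 and hi="k j1 - 1", OF j(1) _ _ q e]) (use that kk in auto)
    show False using nb[of 0 "k j1 - 1"] nb[of "k j1 - 1" 0] b vs[OF j(1)] kk unfolding btw_def by auto
  qed
  have ne: "r (v j (k j - 1)) \<noteq> r s0" if "j < 3" for j
  proof -
    have "v j (k j - 1) \<noteq> v j 0" using veq[of j j "k j - 1" 0] k3[OF that] that by auto
    then show ?thesis using rank_ne[of "v j (k j - 1)" s0] vs[OF that] k3[OF that] that by auto
  qed
  have ne2: "r (v j1 (k j1 - 1)) \<noteq> r (v j2 (k j2 - 1))" if "j1 < 3" "j2 < 3" "j1 \<noteq> j2" for j1 j2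
  proof -
    have "v j1 (k j1 - 1) \<noteq> v j2 (k j2 - 1)" using veq[of j1 j2 "k j1 - 1" "k j2 - 1"] k3[OF that(1)] k3[OF that(2)] that by auto
    then show ?thesis using rank_ne[of "v j1 (k j1 - 1)" "v j2 (k j2 - 1)"] k3[OF that(1)] k3[OF that(2)] that by auto
  qed
  show False
    by (rule pigeon3b[OF ne[of 0] ne[of 1] ne[of 2] ne2[of 0 1] ne2[of 0 2] ne2[of 1 2]
      P[of 0 1] P[of 1 0] P[of 0 2] P[of 2 0] P[of 1 2] P[of 2 1]]) auto
qed


lemma caseA:
  assumes j: "j1 < 3" "j2 < 3" "j1 \<noteq> j2"
    and O1: "\<And>i. i \<le> k j1 \<Longrightarrow> Oty (v j1 i) (v j1 (Suc i))"
    and O2: "\<And>i. i \<le> k j2 \<Longrightarrow> Oty (v j2 i) (v j2 (Suc i))"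
  shows False
proof -
  have kk: "3 \<le> k j1" "3 \<le> k j2" using k3 j by auto
  have s1: "v j1 0 = s0" "v j2 0 = s0" using vs[OF j(1)] vs[OF j(2)] by auto
  have t1: "v j1 (Suc (k j1)) = t0" "v j2 (Suc (k j2)) = t0" using vt[OF j(1)] vt[OF j(2)] by auto
  have qW: "v j2 2 \<in> VS" using j kk by auto
  have nbg: "\<not> (r (v j1 y1) < r (v j2 2) \<and> r (v j2 2) < r (v j1 y2))"
    if "y1 \<le> Suc (k j1)" "y2 \<le> Suc (k j1)" for y1 y2
  proof (rule seg_nb[where lo=0 and hi="Suc (k j1)", OF j(1) _ _ qW])
    fix i assume "0 \<le> i" "i < Suc (k j1)"
    then show "Oty (v j1 i) (v j1 (Suc i)) \<and> far (v j2 2) (v j1 i) (v j1 (Suc i))"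
      using O1[of i] far_gen[of j1 j2 i 2] j kk by auto
  qed (use that in auto)
  have nbq: "\<not> (r (v j2 y1) < r (v j1 y) \<and> r (v j1 y) < r (v j2 y2))"
    if "y1 \<le> Suc (k j2)" "y2 \<le> Suc (k j2)" "2 \<le> y" "y + 1 \<le> k j1" for y y1 y2
  proof (rule seg_nb[where lo=0 and hi="Suc (k j2)", OF j(2) _ _])
    show "v j1 y \<in> VS" using that j by auto
    fix i assume "0 \<le> i" "i < Suc (k j2)"
    then show "Oty (v j2 i) (v j2 (Suc i)) \<and> far (v j1 y) (v j2 i) (v j2 (Suc i))"
      using O2[of i] far_gen[of j2 j1 i y] j kk that by auto
  qed (use that in auto)
  define S where "S = r s0"
  define T where "T = r t0"
  define X1 where "X1 = r (v j1 1)"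
  define X2 where "X2 = r (v j1 2)"
  define XM where "XM = r (v j1 (k j1 - 1))"
  define XK where "XK = r (v j1 (k j1))"
  define W where "W = r (v j2 2)"
  have e1: "\<exists>y\<le>Suc (k j1). r s0 = r (v j1 y)" using s1 by (intro exI[of _ 0]) auto
  have e2: "\<exists>y\<le>Suc (k j1). r t0 = r (v j1 y)" using t1 by (intro exI[of _ "Suc (k j1)"]) auto
  have e3: "\<exists>y\<le>Suc (k j1). r (v j1 1) = r (v j1 y)" by (intro exI[of _ 1]) auto
  have e4: "\<exists>y\<le>Suc (k j1). r (v j1 2) = r (v j1 y)" using kk by (intro exI[of _ 2]) auto
  have e5: "\<exists>y\<le>Suc (k j1). r (v j1 (k j1 - 1)) = r (v j1 y)" by (intro exI[of _ "k j1 - 1"]) auto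
  have e6: "\<exists>y\<le>Suc (k j1). r (v j1 (k j1)) = r (v j1 y)" by (intro exI[of _ "k j1"]) auto
  have mem1: "\<exists>y\<le>Suc (k j1). a = r (v j1 y)" if "a \<in> {S,T,X1,X2,XM,XK}" for a
    using that e1 e2 e3 e4 e5 e6 unfolding S_def T_def X1_def X2_def XM_def XK_def by blast
  have f1: "\<exists>y\<le>Suc (k j2). r s0 = r (v j2 y)" using s1 by (intro exI[of _ 0]) auto
  have f2: "\<exists>y\<le>Suc (k j2). r t0 = r (v j2 y)" using t1 by (intro exI[of _ "Suc (k j2)"]) auto
  have f3: "\<exists>y\<le>Suc (k j2). r (v j2 2) = r (v j2 y)" using kk by (intro exI[of _ 2]) auto
  have mem2: "\<exists>y\<le>Suc (k j2). a = r (v j2 y)" if "a \<in> {S,T,W}" for a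
    using that f1 f2 f3 unfolding S_def T_def W_def by blast
  have nb1: "\<not>(a < W \<and> W < b)" if "a \<in> {S,T,X1,X2,XM,XK}" "b \<in> {S,T,X1,X2,XM,XK}" for a b
    using mem1[OF that(1)] mem1[OF that(2)] nbg unfolding W_def by blast
  have nb2: "\<not>(a < q \<and> q < b)" if qq: "q \<in> {X2,XM}" and ab: "a \<in> {S,T,W}" "b \<in> {S,T,W}" for q a b
  proof -
    obtain y where y: "q = r (v j1 y)" "2 \<le> y" "y + 1 \<le> k j1"
    proof (cases "q = X2")
      case True then show ?thesis using that[of 2] kk unfolding X2_def by auto
    next
      case False then have "q = XM" using qq by auto
      then show ?thesis using that[of "k j1 - 1"] kk unfolding XM_def by auto
    qed
    show ?thesis using mem2[OF ab(1)] mem2[OF ab(2)] nbq[OF _ _ y(2,3)] y(1) by blast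
  qed
  have ot: "far t0 (v j1 i) (v j1 (Suc i))" if "i + 2 \<le> k j1" for i
    using far_t[OF j(1), of i] that by auto
  have os: "far s0 (v j1 i) (v j1 (Suc i))" if "2 \<le> i" "i \<le> k j1" for i
    using far_s[OF j(1), of i] that by auto
  have tV: "t0 \<in> VS" and sV: "s0 \<in> VS" using vVS[of 0 "Suc (k 0)"] vVS[of 0 0] by auto
  have o1: "\<not> btw r (v j1 1) t0 (v j1 2)"
  proof -
    have "Oty (v j1 1) (v j1 2)" using O1[of 1] kk by (simp add: numeral_2_eq_2)
    moreover have "far t0 (v j1 1) (v j1 2)" using ot[of 1] kk by (simp add: numeral_2_eq_2)
    ultimately show ?thesis using tV unfolding Oty_def by blast
  qed
  have o2: "\<not> btw r (v j1 (k j1 - 1)) s0 (v j1 (k j1))"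
  proof -
    have "Suc (k j1 - 1) = k j1" using kk by auto
    then show ?thesis using O1[of "k j1 - 1"] os[of "k j1 - 1"] kk sV unfolding Oty_def by auto
  qed
  have o3: "\<not> btw r (v j1 0) t0 (v j1 1)" using O1[of 0] ot[of 0] kk tV unfolding Oty_def by auto
  have o4: "\<not> btw r (v j1 (k j1)) s0 (v j1 (Suc (k j1)))" using O1[of "k j1"] os[of "k j1"] kk sV unfolding Oty_def by auto
  have neq: "r (v ja ia) \<noteq> r (v jb ib)" if "ja < 3" "jb < 3" "ia \<le> Suc (k ja)" "ib \<le> Suc (k jb)" "v ja ia \<noteq> v jb ib"
    for ja jb ia ib using rank_ne that by auto
  have d: "W \<noteq> S" "W \<noteq> T" "W \<noteq> X1" "W \<noteq> X2" "W \<noteq> XM" "W \<noteq> XK" "X2 \<noteq> S" "X2 \<noteq> T"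
    "XM \<noteq> S" "XM \<noteq> T" "X1 \<noteq> T" "XK \<noteq> S" "S \<noteq> T"
    unfolding S_def T_def X1_def X2_def XM_def XK_def W_def
    using neq[of j2 j2 2 0] neq[of j2 j2 2 "Suc (k j2)"] neq[of j2 j1 2 1] neq[of j2 j1 2 2]
      neq[of j2 j1 2 "k j1 - 1"] neq[of j2 j1 2 "k j1"] neq[of j1 j1 2 0] neq[of j1 j1 2 "Suc (k j1)"]
      neq[of j1 j1 "k j1 - 1" 0] neq[of j1 j1 "k j1 - 1" "Suc (k j1)"] neq[of j1 j1 1 "Suc (k j1)"]
      neq[of j1 j1 "k j1" 0] neq[of j1 j1 0 "Suc (k j1)"]
      veq[of j2 j2 2 0] veq[of j2 j2 2 "Suc (k j2)"] veq[of j2 j1 2 1] veq[of j2 j1 2 2]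
      veq[of j2 j1 2 "k j1 - 1"] veq[of j2 j1 2 "k j1"] veq[of j1 j1 2 0] veq[of j1 j1 2 "Suc (k j1)"]
      veq[of j1 j1 "k j1 - 1" 0] veq[of j1 j1 "k j1 - 1" "Suc (k j1)"] veq[of j1 j1 1 "Suc (k j1)"]
      veq[of j1 j1 "k j1" 0] veq[of j1 j1 0 "Suc (k j1)"] s1 t1 j kk
    by auto
  show False
  proof (rule arithA[OF d nb1 nb2])
    show "\<not> (X1 < T \<and> T < X2 \<or> X2 < T \<and> T < X1)" using o1 unfolding btw_def X1_def T_def X2_def by auto
    show "\<not> (XM < S \<and> S < XK \<or> XK < S \<and> S < XM)" using o2 unfolding btw_def XM_def S_def XK_def by auto
    show "\<not> (S < T \<and> T < X1 \<or> X1 < T \<and> T < S)" using o3 s1 unfolding btw_def X1_def T_def S_def by auto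
    show "\<not> (XK < S \<and> S < T \<or> T < S \<and> S < XK)" using o4 t1 unfolding btw_def XK_def T_def S_def by auto
  qed
qed


lemma not_far_I:
  assumes "ja < 3" "jb < 3" "ia \<le> k ja" "ib \<le> k jb"
    "Ity (v ja ia) (v ja (Suc ia))" "Ity (v jb ib) (v jb (Suc ib))"
  shows "\<not> (far (v jb ib) (v ja ia) (v ja (Suc ia)) \<and> far (v jb (Suc ib)) (v ja ia) (v ja (Suc ia)))"
  using far_I[OF assms(5,6)] assms(1-4) by auto

lemma cc:
  assumes "ja < 3" "jb < 3" "ja \<noteq> jb" "ia \<le> k ja" "ib \<le> k jb"
    "Ity (v ja ia) (v ja (Suc ia))" "Ity (v jb ib) (v jb (Suc ib))"
  shows "(ia \<le> 1 \<and> ib \<le> 1) \<or> (k ja \<le> ia + 1 \<and> k jb \<le> ib + 1)"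
  using cross_close[OF assms(1-5) not_far_I[OF assms(1,2,4,5,6,7)]] .

theorem contra: False
proof -
  define HI where "HI j = (\<exists>i\<le>k j. Ity (v j i) (v j (Suc i)))" for j
  have A: "HI j1 \<or> HI j2" if "j1 < 3" "j2 < 3" "j1 \<noteq> j2" for j1 j2
  proof (rule ccontr)
    assume "\<not> (HI j1 \<or> HI j2)"
    then have "Oty (v j1 i) (v j1 (Suc i))" if "i \<le> k j1" for i
      using dich[of j1 i] that \<open>j1 < 3\<close> unfolding HI_def by blast
    moreover have "Oty (v j2 i) (v j2 (Suc i))" if "i \<le> k j2" for i
      using dich[of j2 i] that \<open>j2 < 3\<close> \<open>\<not> (HI j1 \<or> HI j2)\<close> unfolding HI_def by blast
    ultimately show False using caseA[OF that] by blast
  qed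
  obtain j1 j2 where jj: "j1 < 3" "j2 < 3" "j1 \<noteq> j2" "HI j1" "HI j2"
  proof -
    have "(HI 0 \<and> HI 1) \<or> (HI 0 \<and> HI 2) \<or> (HI 1 \<and> HI 2)" using A[of 0 1] A[of 0 2] A[of 1 2] by auto
    then show ?thesis
    proof (elim disjE conjE)
      assume "HI 0" "HI 1" then show ?thesis using that[of 0 1] by simp
    next
      assume "HI 0" "HI 2" then show ?thesis using that[of 0 2] by simp
    next
      assume "HI 1" "HI 2" then show ?thesis using that[of 1 2] by simp
    qed
  qed
  obtain i1 where i1: "i1 \<le> k j1" "Ity (v j1 i1) (v j1 (Suc i1))" using jj(4) unfolding HI_def by blast
  obtain i2 where i2: "i2 \<le> k j2" "Ity (v j2 i2) (v j2 (Suc i2))" using jj(5) unfolding HI_def by blast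
  have k1: "3 \<le> k j1" using k3 jj by auto
  have c12: "(i1 \<le> 1 \<and> i2 \<le> 1) \<or> (k j1 \<le> i1 + 1 \<and> k j2 \<le> i2 + 1)"
    using cc[OF jj(1-3) i1(1) i2(1) i1(2) i2(2)] .
  show False
  proof (cases "i1 \<le> 1")
    case True
    show False
    proof (rule caseB)
      fix j i assume ji: "j < 3" "2 \<le> i" "i \<le> k j"
      show "Oty (v j i) (v j (Suc i))"
      proof (rule ccontr)
        assume "\<not> Oty (v j i) (v j (Suc i))"
        then have I: "Ity (v j i) (v j (Suc i))" using dich[OF ji(1) ji(3)] by blast
        show False
        proof (cases "j = j1")
          case False
          then show False using cc[OF jj(1) ji(1) _ i1(1) ji(3) i1(2) I] True ji k1 by auto
        next
          case True
          then have "j \<noteq> j2" using jj by auto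
          moreover have "i2 \<le> 1" using c12 \<open>i1 \<le> 1\<close> k1 by auto
          moreover have "3 \<le> k j2" using k3 jj by auto
          ultimately show False using cc[OF jj(2) ji(1) _ i2(1) ji(3) i2(2) I] ji by auto
        qed
      qed
    qed
  next
    case False
    then have t1: "k j1 \<le> i1 + 1" "k j2 \<le> i2 + 1" using c12 by auto
    show False
    proof (rule caseB')
      fix j i assume ji: "j < 3" "i + 2 \<le> k j"
      have ij: "i \<le> k j" using ji by auto
      show "Oty (v j i) (v j (Suc i))"
      proof (rule ccontr)
        assume "\<not> Oty (v j i) (v j (Suc i))"
        then have I: "Ity (v j i) (v j (Suc i))" using dich[OF ji(1) ij] by blast
        show False
        proof (cases "j = j1")
          case False
          then show False using cc[OF jj(1) ji(1) _ i1(1) ij i1(2) I] t1 ji k1 by auto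
        next
          case True
          then have "j \<noteq> j2" using jj by auto
          moreover have "3 \<le> k j2" using k3 jj by auto
          ultimately show False using cc[OF jj(2) ji(1) _ i2(1) ij i2(2) I] ji t1 by auto
        qed
      qed
    qed
  qed
qed

end



fun cps :: "'a list \<Rightarrow> ('a \<times> 'a) set" where
  "cps (a # b # xs) = insert (a, b) (cps (b # xs))"
| "cps _ = {}"

lemma cps_nth: "(x, y) \<in> cps L \<longleftrightarrow> (\<exists>i. Suc i < length L \<and> L ! i = x \<and> L ! Suc i = y)"
proof (induction L rule: cps.induct)
  case (1 a b xs)
  show ?case
  proof
    assume "(x, y) \<in> cps (a # b # xs)"
    then consider "x = a" "y = b" | "(x, y) \<in> cps (b # xs)" by auto
    then show "\<exists>i. Suc i < length (a # b # xs) \<and> (a # b # xs) ! i = x \<and> (a # b # xs) ! Suc i = y"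
    proof cases
      case 1 then show ?thesis by (intro exI[of _ 0]) auto
    next
      case 2
      then obtain i where "Suc i < length (b # xs)" "(b # xs) ! i = x" "(b # xs) ! Suc i = y" using "1.IH" by blast
      then show ?thesis by (intro exI[of _ "Suc i"]) auto
    qed
  next
    assume "\<exists>i. Suc i < length (a # b # xs) \<and> (a # b # xs) ! i = x \<and> (a # b # xs) ! Suc i = y"
    then obtain i where i: "Suc i < length (a # b # xs)" "(a # b # xs) ! i = x" "(a # b # xs) ! Suc i = y" by blast
    show "(x, y) \<in> cps (a # b # xs)"
    proof (cases i)
      case 0 then show ?thesis using i by auto
    next
      case (Suc i')
      then have "(x, y) \<in> cps (b # xs)" using "1.IH" i by auto
      then show ?thesis by simp
    qed
  qed
next
  case ("2_1") then show ?case by simp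
next
  case ("2_2" v) then show ?case by simp
qed

lemma path_adj_cps: "path_adj p x y \<longleftrightarrow> (x, y) \<in> cps p \<or> (y, x) \<in> cps p"
  unfolding path_adj_def cps_nth by blast

definition cat :: "'a list \<Rightarrow> 'a list \<Rightarrow> 'a list" where
  "cat xs ys = xs @ tl ys"

lemma cps_cat: "xs \<noteq> [] \<Longrightarrow> ys \<noteq> [] \<Longrightarrow> last xs = hd ys \<Longrightarrow> cps (cat xs ys) = cps xs \<union> cps ys"
proof (induction xs rule: cps.induct)
  case (1 a b xs)
  have "cat (a # b # xs) ys = a # cat (b # xs) ys" by (simp add: cat_def)
  moreover have "cat (b # xs) ys = b # (xs @ tl ys)" by (simp add: cat_def)
  ultimately show ?case using 1 by (simp add: cat_def)
next
  case ("2_1") then show ?case by simp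
next
  case ("2_2" a)
  then show ?case by (cases ys) (auto simp: cat_def)
qed

lemma cat_facts:
  assumes "xs \<noteq> []" "ys \<noteq> []" "last xs = hd ys"
  shows "set (cat xs ys) = set xs \<union> set ys" "hd (cat xs ys) = hd xs" "last (cat xs ys) = last ys"
    "length (cat xs ys) = length xs + length ys - 1" "cat xs ys \<noteq> []"
proof -
  obtain h t where ys: "ys = h # t" using assms(2) by (cases ys) auto
  show "set (cat xs ys) = set xs \<union> set ys" using assms ys by (auto simp: cat_def)
  show "hd (cat xs ys) = hd xs" using assms by (simp add: cat_def)
  show "last (cat xs ys) = last ys" using assms ys by (auto simp: cat_def)
  show "length (cat xs ys) = length xs + length ys - 1" using ys by (simp add: cat_def)
  show "cat xs ys \<noteq> []" using assms by (simp add: cat_def)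
qed

lemma cat_distinct: "distinct xs \<Longrightarrow> distinct ys \<Longrightarrow> set xs \<inter> set (tl ys) = {} \<Longrightarrow> distinct (cat xs ys)"
  by (simp add: cat_def distinct_tl)

lemma piece:
  assumes "distinct p" "2 \<le> length p"
  shows "set p = {hd p, last p} \<union> set (butlast (tl p))" "set (tl p) = insert (last p) (set (butlast (tl p)))"
    "hd p \<noteq> last p" "hd p \<notin> set (butlast (tl p))" "last p \<notin> set (butlast (tl p))"
proof -
  obtain a q where p0: "p = a # q" using assms(2) by (cases p) auto
  have p: "p = a # q" "q \<noteq> []" using p0 assms(2) by auto
  have q: "q = butlast q @ [last q]" using p(2) by simp
  have "distinct (a # butlast q @ [last q])" using assms(1) p q by metis
  then have d: "a \<notin> set (butlast q)" "a \<noteq> last q" "last q \<notin> set (butlast q)" by auto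
  have sq: "set q = insert (last q) (set (butlast q))" using q by (metis Un_insert_right append_Nil2 list.simps(15) set_append)
  show "set p = {hd p, last p} \<union> set (butlast (tl p))" using p sq by auto
  show "set (tl p) = insert (last p) (set (butlast (tl p)))" using p sq by auto
  show "hd p \<noteq> last p" using p d by auto
  show "hd p \<notin> set (butlast (tl p))" using p d by auto
  show "last p \<notin> set (butlast (tl p))" using p d by auto
qed


lemma path4:
  assumes d: "distinct A" "distinct B" "distinct C" "distinct D"
    and l: "2 \<le> length A" "2 \<le> length B" "2 \<le> length C" "2 \<le> length D"
    and e: "hd A = a0" "last A = a1" "hd B = a1" "last B = a2" "hd C = a2" "last C = a3" "hd D = a3" "last D = a4"
    and i: "set (butlast (tl A)) \<inter> set (butlast (tl B)) = {}" "set (butlast (tl A)) \<inter> set (butlast (tl C)) = {}"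
      "set (butlast (tl A)) \<inter> set (butlast (tl D)) = {}" "set (butlast (tl B)) \<inter> set (butlast (tl C)) = {}"
      "set (butlast (tl B)) \<inter> set (butlast (tl D)) = {}" "set (butlast (tl C)) \<inter> set (butlast (tl D)) = {}"
      "{a0,a1,a2,a3,a4} \<inter> (set (butlast (tl A)) \<union> set (butlast (tl B)) \<union> set (butlast (tl C)) \<union> set (butlast (tl D))) = {}"
    and a: "distinct [a0,a1,a2,a3,a4]"
  shows "distinct (cat (cat (cat A B) C) D)" "5 \<le> length (cat (cat (cat A B) C) D)"
    "hd (cat (cat (cat A B) C) D) = a0" "last (cat (cat (cat A B) C) D) = a4"
    "set (cat (cat (cat A B) C) D) = {a0,a1,a2,a3,a4} \<union> set (butlast (tl A)) \<union> set (butlast (tl B)) \<union> set (butlast (tl C)) \<union> set (butlast (tl D))"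
    "cps (cat (cat (cat A B) C) D) = cps A \<union> cps B \<union> cps C \<union> cps D"
proof -
  note pA = piece[OF d(1) l(1)] and pB = piece[OF d(2) l(2)] and pC = piece[OF d(3) l(3)] and pD = piece[OF d(4) l(4)]
  have ne: "A \<noteq> []" "B \<noteq> []" "C \<noteq> []" "D \<noteq> []" using l by auto
  have j1: "last A = hd B" using e by simp
  note cAB = cat_facts[OF ne(1) ne(2) j1]
  have j2: "last (cat A B) = hd C" using cAB e by simp
  note cABC = cat_facts[OF cAB(5) ne(3) j2]
  have j3: "last (cat (cat A B) C) = hd D" using cABC cAB e by simp
  note cL = cat_facts[OF cABC(5) ne(4) j3]
  have dAB: "distinct (cat A B)"
    by (rule cat_distinct[OF d(1) d(2)]) (use pA pB e i a in auto)
  have dABC: "distinct (cat (cat A B) C)"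
    by (rule cat_distinct[OF dAB d(3)]) (use pA pB pC e i a cAB in auto)
  show "distinct (cat (cat (cat A B) C) D)"
    by (rule cat_distinct[OF dABC d(4)]) (use pA pB pC pD e i a cAB cABC in auto)
  show "5 \<le> length (cat (cat (cat A B) C) D)" using cL cABC cAB l by simp
  show "hd (cat (cat (cat A B) C) D) = a0" using cL cABC cAB e by simp
  show "last (cat (cat (cat A B) C) D) = a4" using cL e by simp
  show "set (cat (cat (cat A B) C) D) = {a0,a1,a2,a3,a4} \<union> set (butlast (tl A)) \<union> set (butlast (tl B)) \<union> set (butlast (tl C)) \<union> set (butlast (tl D))"
    using cL cABC cAB pA pB pC pD e by auto
  show "cps (cat (cat (cat A B) C) D) = cps A \<union> cps B \<union> cps C \<union> cps D"
    using cps_cat[OF cABC(5) ne(4) j3] cps_cat[OF cAB(5) ne(3) j2] cps_cat[OF ne(1) ne(2) j1] by auto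
qed


lemma adj_form:
  fixes v :: "nat \<Rightarrow> nat \<Rightarrow> 'a" and k :: "nat \<Rightarrow> nat"
  assumes k3: "\<And>j. j < 3 \<Longrightarrow> 3 \<le> k j"
    and veq: "\<And>j j' i i'. j < 3 \<Longrightarrow> j' < 3 \<Longrightarrow> i \<le> Suc (k j) \<Longrightarrow> i' \<le> Suc (k j') \<Longrightarrow>
      (v j i = v j' i') = ((j = j' \<and> i = i') \<or> (i = 0 \<and> i' = 0) \<or> (i = Suc (k j) \<and> i' = Suc (k j')))"
    and r: "j < 3" "j' < 3" "i \<le> Suc (k j)" "i' \<le> Suc (k j')"
  shows "(\<exists>j''<3. \<exists>p. p \<le> k j'' \<and> ((v j'' p = v j i \<and> v j'' (Suc p) = v j' i') \<or> (v j'' p = v j' i' \<and> v j'' (Suc p) = v j i)))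
    = ((j = j' \<and> (i' = Suc i \<or> i = Suc i')) \<or> (i = 0 \<and> i' = 1) \<or> (i = 1 \<and> i' = 0)
         \<or> (i = Suc (k j) \<and> i' = k j') \<or> (i = k j \<and> i' = Suc (k j')))" (is "?L = ?R")
proof
  assume ?L
  then obtain j'' p where p: "j'' < 3" "p \<le> k j''"
    "(v j'' p = v j i \<and> v j'' (Suc p) = v j' i') \<or> (v j'' p = v j' i' \<and> v j'' (Suc p) = v j i)" by blast
  have kk: "3 \<le> k j''" "3 \<le> k j" "3 \<le> k j'" using k3 p r by auto
  have pr: "p \<le> Suc (k j'')" "Suc p \<le> Suc (k j'')" using p by auto
  note e1 = veq[OF p(1) r(1) pr(1) r(3)] and e2 = veq[OF p(1) r(2) pr(2) r(4)]
    and e3 = veq[OF p(1) r(2) pr(1) r(4)] and e4 = veq[OF p(1) r(1) pr(2) r(3)]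
  from p(3) show ?R
  proof
    assume a: "v j'' p = v j i \<and> v j'' (Suc p) = v j' i'"
    then have "(j'' = j \<and> p = i) \<or> (p = 0 \<and> i = 0) \<or> (p = Suc (k j'') \<and> i = Suc (k j))"
       "(j'' = j' \<and> Suc p = i') \<or> (Suc p = 0 \<and> i' = 0) \<or> (Suc p = Suc (k j'') \<and> i' = Suc (k j'))"
      using e1 e2 by auto
    then show ?R using p(2) kk by auto
  next
    assume a: "v j'' p = v j' i' \<and> v j'' (Suc p) = v j i"
    then have "(j'' = j' \<and> p = i') \<or> (p = 0 \<and> i' = 0) \<or> (p = Suc (k j'') \<and> i' = Suc (k j'))"
       "(j'' = j \<and> Suc p = i) \<or> (Suc p = 0 \<and> i = 0) \<or> (Suc p = Suc (k j'') \<and> i = Suc (k j))"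
      using e3 e4 by auto
    then show ?R using p(2) kk by auto
  qed
next
  assume ?R
  have kk: "3 \<le> k j" "3 \<le> k j'" using k3 r by auto
  have s: "v j 0 = v j' 0" using veq[of j j' 0 0] r by auto
  have t: "v j (Suc (k j)) = v j' (Suc (k j'))" using veq[of j j' "Suc (k j)" "Suc (k j')"] r by auto
  from \<open>?R\<close> show ?L
  proof (elim disjE conjE)
    assume "j = j'" "i' = Suc i" then show ?L using r by (intro exI[of _ j] conjI exI[of _ i]) auto
  next
    assume "j = j'" "i = Suc i'" then show ?L using r by (intro exI[of _ j] conjI exI[of _ i']) auto
  next
    assume "i = 0" "i' = 1" then show ?L using r s kk by (intro exI[of _ j'] conjI exI[of _ 0]) auto
  next
    assume "i = 1" "i' = 0" then show ?L using r s kk by (intro exI[of _ j] conjI exI[of _ 0]) auto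
  next
    assume "i = Suc (k j)" "i' = k j'" then show ?L using r t kk by (intro exI[of _ j'] conjI exI[of _ "k j'"]) auto
  next
    assume "i = k j" "i' = Suc (k j')" then show ?L using r t kk by (intro exI[of _ j] conjI exI[of _ "k j"]) auto
  qed
qed


lemma theta_from_lists:
  fixes Ls :: "nat \<Rightarrow> 'a list" and E :: "'a \<Rightarrow> 'a \<Rightarrow> bool" and r :: "'a \<Rightarrow> int"
  assumes dist: "\<And>j. j < 3 \<Longrightarrow> distinct (Ls j)"
    and len: "\<And>j. j < 3 \<Longrightarrow> 5 \<le> length (Ls j)"
    and hd: "\<And>j. j < 3 \<Longrightarrow> hd (Ls j) = s" and lst: "\<And>j. j < 3 \<Longrightarrow> last (Ls j) = t"
    and inter: "\<And>j j'. j < 3 \<Longrightarrow> j' < 3 \<Longrightarrow> j \<noteq> j' \<Longrightarrow> set (Ls j) \<inter> set (Ls j') \<subseteq> {s, t}"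
    and U: "U = (\<Union>j<3. set (Ls j))"
    and adj: "\<And>x y. x \<in> U \<Longrightarrow> y \<in> U \<Longrightarrow> E x y = (\<exists>j<3. (x, y) \<in> cps (Ls j) \<or> (y, x) \<in> cps (Ls j))"
    and rinj: "\<And>x y. x \<in> U \<Longrightarrow> y \<in> U \<Longrightarrow> r x = r y \<Longrightarrow> x = y"
    and xf: "\<And>a b c d. a \<in> U \<Longrightarrow> b \<in> U \<Longrightarrow> c \<in> U \<Longrightarrow> d \<in> U \<Longrightarrow>
       r a < r b \<Longrightarrow> r b < r c \<Longrightarrow> r c < r d \<Longrightarrow> E a c \<Longrightarrow> E b d \<Longrightarrow> E a b \<or> E a d \<or> E b c \<or> E c d"
  shows "theta E r (\<lambda>j i. Ls j ! i) (\<lambda>j. length (Ls j) - 2)"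
proof -
  define v where "v = (\<lambda>j i. Ls j ! i)"
  define k where "k = (\<lambda>j. length (Ls j) - 2)"
  have k3: "3 \<le> k j" if "j < 3" for j using len[OF that] unfolding k_def by auto
  have lenk: "length (Ls j) = Suc (Suc (k j))" if "j < 3" for j using len[OF that] unfolding k_def by auto
  have s0: "Ls j ! 0 = s" if "j < 3" for j
  proof -
    have "Ls j \<noteq> []" using len[OF that] by auto
    then show ?thesis using hd[OF that] hd_conv_nth[of "Ls j"] by simp
  qed
  have t0: "Ls j ! Suc (k j) = t" if "j < 3" for j
  proof -
    have "Ls j \<noteq> []" using len[OF that] by auto
    then show ?thesis using lst[OF that] last_conv_nth[of "Ls j"] lenk[OF that] by simp
  qed
  have VS: "VSet v k = U"
  proof
    show "VSet v k \<subseteq> U" unfolding VSet_def U v_def using lenk by fastforce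
    show "U \<subseteq> VSet v k"
    proof
      fix x assume "x \<in> U"
      then obtain j where j: "j < 3" "x \<in> set (Ls j)" using U by auto
      then obtain i where "i < length (Ls j)" "x = Ls j ! i" by (metis in_set_conv_nth)
      then show "x \<in> VSet v k" unfolding VSet_def v_def using j lenk[OF j(1)] by fastforce
    qed
  qed
  have veq: "(v j i = v j' i') = ((j = j' \<and> i = i') \<or> (i = 0 \<and> i' = 0) \<or> (i = Suc (k j) \<and> i' = Suc (k j')))"
    if r: "j < 3" "j' < 3" "i \<le> Suc (k j)" "i' \<le> Suc (k j')" for j j' i i'
  proof (cases "j = j'")
    case True
    have "i < length (Ls j)" "i' < length (Ls j)" using r lenk True by auto
    then have "(Ls j ! i = Ls j ! i') = (i = i')" using dist[OF r(1)] nth_eq_iff_index_eq by blast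
    then show ?thesis using True unfolding v_def by auto
  next
    case False
    have il: "i < length (Ls j)" "i' < length (Ls j')" using r lenk by auto
    show ?thesis
    proof
      assume eq: "v j i = v j' i'"
      have "Ls j ! i \<in> set (Ls j) \<inter> set (Ls j')" using eq il unfolding v_def by (metis IntI nth_mem)
      then have "Ls j ! i = s \<or> Ls j ! i = t" using inter[OF r(1,2) False] by auto
      then show "(j = j' \<and> i = i') \<or> (i = 0 \<and> i' = 0) \<or> (i = Suc (k j) \<and> i' = Suc (k j'))"
      proof
        assume "Ls j ! i = s"
        then have "Ls j ! i = Ls j ! 0" "Ls j' ! i' = Ls j' ! 0" using s0 r eq unfolding v_def by auto
        then have "i = 0" "i' = 0" using nth_eq_iff_index_eq[OF dist[OF r(1)]] nth_eq_iff_index_eq[OF dist[OF r(2)]] il len r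
          by (metis order_less_le_trans zero_less_numeral)+
        then show ?thesis by simp
      next
        assume "Ls j ! i = t"
        then have "Ls j ! i = Ls j ! Suc (k j)" "Ls j' ! i' = Ls j' ! Suc (k j')" using t0 r eq unfolding v_def by auto
        moreover have "Suc (k j) < length (Ls j)" "Suc (k j') < length (Ls j')" using lenk r by auto
        ultimately have "i = Suc (k j)" "i' = Suc (k j')"
          using nth_eq_iff_index_eq[OF dist[OF r(1)]] nth_eq_iff_index_eq[OF dist[OF r(2)]] il by blast+
        then show ?thesis by simp
      qed
    next
      assume "(j = j' \<and> i = i') \<or> (i = 0 \<and> i' = 0) \<or> (i = Suc (k j) \<and> i' = Suc (k j'))"
      then show "v j i = v j' i'" using False s0 t0 r unfolding v_def by auto
    qed
  qed
  have inU: "v j i \<in> U" if "j < 3" "i \<le> Suc (k j)" for j i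
    using VS that unfolding VSet_def by blast
  have cpsv: "(x, y) \<in> cps (Ls j) = (\<exists>p. p \<le> k j \<and> v j p = x \<and> v j (Suc p) = y)" if "j < 3" for j x y
    unfolding cps_nth v_def using lenk[OF that] less_Suc_eq_le by auto
  have vadj: "E (v j i) (v j' i') = ((j = j' \<and> (i' = Suc i \<or> i = Suc i')) \<or> (i = 0 \<and> i' = 1) \<or> (i = 1 \<and> i' = 0)
         \<or> (i = Suc (k j) \<and> i' = k j') \<or> (i = k j \<and> i' = Suc (k j')))"
    if r: "j < 3" "j' < 3" "i \<le> Suc (k j)" "i' \<le> Suc (k j')" for j j' i i'
  proof -
    have "E (v j i) (v j' i') = (\<exists>j''<3. (v j i, v j' i') \<in> cps (Ls j'') \<or> (v j' i', v j i) \<in> cps (Ls j''))"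
      using adj inU r by auto
    also have "\<dots> = (\<exists>j''<3. \<exists>p. p \<le> k j'' \<and> ((v j'' p = v j i \<and> v j'' (Suc p) = v j' i') \<or> (v j'' p = v j' i' \<and> v j'' (Suc p) = v j i)))"
      using cpsv by blast
    also have "\<dots> = ((j = j' \<and> (i' = Suc i \<or> i = Suc i')) \<or> (i = 0 \<and> i' = 1) \<or> (i = 1 \<and> i' = 0)
         \<or> (i = Suc (k j) \<and> i' = k j') \<or> (i = k j \<and> i' = Suc (k j')))"
      by (rule adj_form[where v=v and k=k]) (fact k3 veq r)+
    finally show ?thesis by simp
  qed
  have "theta E r v k"
  proof
    show "\<And>j. j < 3 \<Longrightarrow> 3 \<le> k j" by (rule k3)
    show "\<And>j j' i i'. j < 3 \<Longrightarrow> j' < 3 \<Longrightarrow> i \<le> Suc (k j) \<Longrightarrow> i' \<le> Suc (k j') \<Longrightarrow>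
      (v j i = v j' i') = ((j = j' \<and> i = i') \<or> (i = 0 \<and> i' = 0) \<or> (i = Suc (k j) \<and> i' = Suc (k j')))" by (rule veq)
    show "\<And>j j' i i'. j < 3 \<Longrightarrow> j' < 3 \<Longrightarrow> i \<le> Suc (k j) \<Longrightarrow> i' \<le> Suc (k j') \<Longrightarrow>
      E (v j i) (v j' i') = ((j = j' \<and> (i' = Suc i \<or> i = Suc i')) \<or> (i = 0 \<and> i' = 1) \<or> (i = 1 \<and> i' = 0)
         \<or> (i = Suc (k j) \<and> i' = k j') \<or> (i = k j \<and> i' = Suc (k j')))" by (rule vadj)
    show "\<And>x y. x \<in> VSet v k \<Longrightarrow> y \<in> VSet v k \<Longrightarrow> r x = r y \<Longrightarrow> x = y" using rinj VS by blast
    show "\<And>a b c d. a \<in> VSet v k \<Longrightarrow> b \<in> VSet v k \<Longrightarrow> c \<in> VSet v k \<Longrightarrow> d \<in> VSet v k \<Longrightarrow>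
      r a < r b \<Longrightarrow> r b < r c \<Longrightarrow> r c < r d \<Longrightarrow> E a c \<Longrightarrow> E b d \<Longrightarrow> E a b \<or> E a d \<or> E b c \<or> E c d"
      using xf VS by blast
  qed
  then show ?thesis unfolding v_def k_def .
qed


lemma lt3: "j < (3::nat) \<Longrightarrow> j = 0 \<or> j = 1 \<or> j = 2"
  by auto

lemma ex3: "(\<exists>j<(3::nat). Q j) \<longleftrightarrow> Q 0 \<or> Q 1 \<or> Q 2"
proof
  assume "\<exists>j<3. Q j"
  then obtain j where j: "j < 3" "Q j" by blast
  from lt3[OF j(1)] show "Q 0 \<or> Q 1 \<or> Q 2" using j(2) by (elim disjE) simp_all
next
  assume "Q 0 \<or> Q 1 \<or> Q 2"
  then show "\<exists>j<3. Q j"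
  proof (elim disjE)
    assume "Q 0" then show ?thesis by (intro exI[of _ 0]) simp
  next
    assume "Q 1" then show ?thesis by (intro exI[of _ 1]) simp
  next
    assume "Q 2" then show ?thesis by (intro exI[of _ 2]) simp
  qed
qed

lemma inter_gen:
  assumes "inj_on phi VF" "A0 \<subseteq> VF" "A1 \<subseteq> VF" "E0 \<subseteq> EF" "E1 \<subseteq> EF" "E0 \<inter> E1 = {}"
    "\<forall>e\<in>EF. I e \<inter> phi ` VF = {}" "\<forall>e\<in>EF. \<forall>e'\<in>EF. e \<noteq> e' \<longrightarrow> I e \<inter> I e' = {}"
  shows "(phi ` A0 \<union> (\<Union>e\<in>E0. I e)) \<inter> (phi ` A1 \<union> (\<Union>e\<in>E1. I e)) \<subseteq> phi ` (A0 \<inter> A1)"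
proof
  fix x assume x: "x \<in> (phi ` A0 \<union> (\<Union>e\<in>E0. I e)) \<inter> (phi ` A1 \<union> (\<Union>e\<in>E1. I e))"
  show "x \<in> phi ` (A0 \<inter> A1)"
  proof (cases "x \<in> phi ` A0")
    case True
    then obtain a where a: "a \<in> A0" "x = phi a" by blast
    have "x \<notin> (\<Union>e\<in>E1. I e)" using assms(2-7) a by blast
    then obtain b where "b \<in> A1" "x = phi b" using x by blast
    then have "a = b" using a assms(1-3) inj_onD[OF assms(1)] by blast
    then show ?thesis using a \<open>b \<in> A1\<close> by blast
  next
    case False
    then obtain e where e: "e \<in> E0" "x \<in> I e" using x by blast
    have "x \<notin> phi ` A1" using assms(2-7) e by blast
    then obtain e' where e': "e' \<in> E1" "x \<in> I e'" using x by blast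
    have "e \<noteq> e'" using e e' assms(6) by blast
    then show ?thesis using assms(4,5,8) e e' by blast
  qed
qed

lemma rank_lemma:
  assumes og: "ordered_graph V E lt"
  and r_def: "\<And>x. r x = int (card {y \<in> V. lt y x})"
  shows "\<And>x y. x \<in> V \<Longrightarrow> y \<in> V \<Longrightarrow> lt x y \<Longrightarrow> r x < r y"
    and "\<And>x y. x \<in> V \<Longrightarrow> y \<in> V \<Longrightarrow> r x = r y \<Longrightarrow> x = y"
    and "\<And>x y. x \<in> V \<Longrightarrow> y \<in> V \<Longrightarrow> r x < r y \<Longrightarrow> lt x y"
proof -
  have fin: "finite V" and irr: "\<And>x. x \<in> V \<Longrightarrow> \<not> lt x x"
    and tr: "\<And>x y z. x \<in> V \<Longrightarrow> y \<in> V \<Longrightarrow> z \<in> V \<Longrightarrow> lt x y \<Longrightarrow> lt y z \<Longrightarrow> lt x z"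
    and tot: "\<And>x y. x \<in> V \<Longrightarrow> y \<in> V \<Longrightarrow> x \<noteq> y \<Longrightarrow> lt x y \<or> lt y x"
    using og unfolding ordered_graph_def by blast+
  show lt: "r x < r y" if xy: "x \<in> V" "y \<in> V" "lt x y" for x y
  proof -
    have sub: "{z \<in> V. lt z x} \<subseteq> {z \<in> V. lt z y}"
    proof
      fix z assume "z \<in> {z \<in> V. lt z x}"
      then have "z \<in> V" "lt z x" by auto
      then show "z \<in> {z \<in> V. lt z y}" using tr[of z x y] xy by auto
    qed
    have "x \<in> {z \<in> V. lt z y}" "x \<notin> {z \<in> V. lt z x}" using xy irr by auto
    then have "{z \<in> V. lt z x} \<subset> {z \<in> V. lt z y}" using sub by blast
    then have "card {z \<in> V. lt z x} < card {z \<in> V. lt z y}" using fin by (simp add: psubset_card_mono)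
    then show ?thesis unfolding r_def by simp
  qed
  show "x = y" if xy: "x \<in> V" "y \<in> V" "r x = r y" for x y
  proof (rule ccontr)
    assume "x \<noteq> y"
    then have "lt x y \<or> lt y x" using tot xy by blast
    then show False using lt[of x y] lt[of y x] xy by auto
  qed
  show "lt x y" if xy: "x \<in> V" "y \<in> V" "r x < r y" for x y
  proof (rule ccontr)
    assume n: "\<not> lt x y"
    show False
    proof (cases "x = y")
      case True then show False using xy by simp
    next
      case False
      then have "lt y x" using tot xy n by blast
      then show False using lt[of y x] xy by auto
    qed
  qed
qed

lemma disj4: "X \<subseteq> Y \<Longrightarrow> A \<inter> Y = {} \<Longrightarrow> B \<inter> Y = {} \<Longrightarrow> C \<inter> Y = {} \<Longrightarrow> D \<inter> Y = {} \<Longrightarrow> X \<inter> (A \<union> B \<union> C \<union> D) = {}"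
  by blast

lemma path_of:
  assumes inj: "inj_on phi VF"
    and pe: "\<forall>e\<in>EF. distinct (P e) \<and> 2 \<le> length (P e) \<and> hd (P e) = phi (fst e) \<and> last (P e) = phi (snd e)
              \<and> set (butlast (tl (P e))) \<inter> phi ` VF = {}"
    and dj: "\<forall>e\<in>EF. \<forall>e'\<in>EF. e \<noteq> e' \<longrightarrow> set (butlast (tl (P e))) \<inter> set (butlast (tl (P e'))) = {}"
    and mem: "(a0,a1) \<in> EF" "(a1,a2) \<in> EF" "(a2,a3) \<in> EF" "(a3,a4) \<in> EF"
    and vs: "a0 \<in> VF" "a1 \<in> VF" "a2 \<in> VF" "a3 \<in> VF" "a4 \<in> VF"
    and dist: "distinct [a0,a1,a2,a3,a4]"
  defines "L \<equiv> cat (cat (cat (P (a0,a1)) (P (a1,a2))) (P (a2,a3))) (P (a3,a4))"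
  shows "distinct L" "5 \<le> length L" "hd L = phi a0" "last L = phi a4"
    "set L = phi ` {a0,a1,a2,a3,a4} \<union> (\<Union>e\<in>{(a0,a1),(a1,a2),(a2,a3),(a3,a4)}. set (butlast (tl (P e))))"
    "cps L = cps (P (a0,a1)) \<union> cps (P (a1,a2)) \<union> cps (P (a2,a3)) \<union> cps (P (a3,a4))"
proof -
  have p1: "distinct (P (a0,a1))" "2 \<le> length (P (a0,a1))" "hd (P (a0,a1)) = phi a0" "last (P (a0,a1)) = phi a1"
    "set (butlast (tl (P (a0,a1)))) \<inter> phi ` VF = {}" using bspec[OF pe mem(1)] by simp_all
  have p2: "distinct (P (a1,a2))" "2 \<le> length (P (a1,a2))" "hd (P (a1,a2)) = phi a1" "last (P (a1,a2)) = phi a2"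
    "set (butlast (tl (P (a1,a2)))) \<inter> phi ` VF = {}" using bspec[OF pe mem(2)] by simp_all
  have p3: "distinct (P (a2,a3))" "2 \<le> length (P (a2,a3))" "hd (P (a2,a3)) = phi a2" "last (P (a2,a3)) = phi a3"
    "set (butlast (tl (P (a2,a3)))) \<inter> phi ` VF = {}" using bspec[OF pe mem(3)] by simp_all
  have p4: "distinct (P (a3,a4))" "2 \<le> length (P (a3,a4))" "hd (P (a3,a4)) = phi a3" "last (P (a3,a4)) = phi a4"
    "set (butlast (tl (P (a3,a4)))) \<inter> phi ` VF = {}" using bspec[OF pe mem(4)] by simp_all
  have ne: "(a0,a1) \<noteq> (a1,a2)" "(a0,a1) \<noteq> (a2,a3)" "(a0,a1) \<noteq> (a3,a4)" "(a1,a2) \<noteq> (a2,a3)"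
    "(a1,a2) \<noteq> (a3,a4)" "(a2,a3) \<noteq> (a3,a4)" using dist by auto
  have i: "set (butlast (tl (P (a0,a1)))) \<inter> set (butlast (tl (P (a1,a2)))) = {}"
    "set (butlast (tl (P (a0,a1)))) \<inter> set (butlast (tl (P (a2,a3)))) = {}"
    "set (butlast (tl (P (a0,a1)))) \<inter> set (butlast (tl (P (a3,a4)))) = {}"
    "set (butlast (tl (P (a1,a2)))) \<inter> set (butlast (tl (P (a2,a3)))) = {}"
    "set (butlast (tl (P (a1,a2)))) \<inter> set (butlast (tl (P (a3,a4)))) = {}"
    "set (butlast (tl (P (a2,a3)))) \<inter> set (butlast (tl (P (a3,a4)))) = {}"
    using mp[OF bspec[OF bspec[OF dj mem(1)] mem(2)] ne(1)] mp[OF bspec[OF bspec[OF dj mem(1)] mem(3)] ne(2)]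
      mp[OF bspec[OF bspec[OF dj mem(1)] mem(4)] ne(3)] mp[OF bspec[OF bspec[OF dj mem(2)] mem(3)] ne(4)]
      mp[OF bspec[OF bspec[OF dj mem(2)] mem(4)] ne(5)] mp[OF bspec[OF bspec[OF dj mem(3)] mem(4)] ne(6)]
    by simp_all
  have sub: "{phi a0, phi a1, phi a2, phi a3, phi a4} \<subseteq> phi ` VF" using vs by auto
  have o: "{phi a0, phi a1, phi a2, phi a3, phi a4} \<inter> (set (butlast (tl (P (a0,a1)))) \<union> set (butlast (tl (P (a1,a2))))
      \<union> set (butlast (tl (P (a2,a3)))) \<union> set (butlast (tl (P (a3,a4))))) = {}"
    by (rule disj4[OF sub p1(5) p2(5) p3(5) p4(5)])
  have d5: "distinct [phi a0, phi a1, phi a2, phi a3, phi a4]"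
    using dist vs inj_on_eq_iff[OF inj] by auto
  note R = path4[OF p1(1) p2(1) p3(1) p4(1) p1(2) p2(2) p3(2) p4(2) p1(3) p1(4) p2(3) p2(4) p3(3) p3(4) p4(3) p4(4)
    i o d5]
  show "distinct L" "5 \<le> length L" "hd L = phi a0" "last L = phi a4"
    "cps L = cps (P (a0,a1)) \<union> cps (P (a1,a2)) \<union> cps (P (a2,a3)) \<union> cps (P (a3,a4))"
    using R unfolding L_def by auto
  show "set L = phi ` {a0,a1,a2,a3,a4} \<union> (\<Union>e\<in>{(a0,a1),(a1,a2),(a2,a3),(a3,a4)}. set (butlast (tl (P e))))"
    using R(5) unfolding L_def by auto
qed


theorem proposition6p2:
  fixes V :: "'a set" and E :: "'a \<Rightarrow> 'a \<Rightarrow> bool" and lt :: "'a \<Rightarrow> 'a \<Rightarrow> bool"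
  assumes "ordered_graph V E lt"
    and "X_free V E lt"
  shows "\<not> induced_subdivision V E B4_vertices B4_edges"
proof
  assume "induced_subdivision V E B4_vertices B4_edges"
  then obtain phi :: "nat \<Rightarrow> 'a" and P :: "nat \<times> nat \<Rightarrow> 'a list" where H:
    "inj_on phi B4_vertices \<and> phi ` B4_vertices \<subseteq> V \<and>
        (\<forall>e\<in>B4_edges. distinct (P e) \<and> length (P e) \<ge> 2 \<and> set (P e) \<subseteq> V \<and>
                 hd (P e) = phi (fst e) \<and> last (P e) = phi (snd e) \<and>
                 (\<forall>i. Suc i < length (P e) \<longrightarrow> E (P e ! i) (P e ! Suc i)) \<and>
                 set (butlast (tl (P e))) \<inter> phi ` B4_vertices = {}) \<and>
        (\<forall>e\<in>B4_edges. \<forall>e'\<in>B4_edges. e \<noteq> e' \<longrightarrow> set (butlast (tl (P e))) \<inter> set (butlast (tl (P e'))) = {}) \<and>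
        (let S = phi ` B4_vertices \<union> (\<Union>e\<in>B4_edges. set (P e)) in
          \<forall>x\<in>S. \<forall>y\<in>S. E x y \<longleftrightarrow> (\<exists>e\<in>B4_edges. path_adj (P e) x y))"
    unfolding induced_subdivision_def by (elim exE) (erule that)
  note inj = H[THEN conjunct1] and img = H[THEN conjunct2, THEN conjunct1]
    and pe0 = H[THEN conjunct2, THEN conjunct2, THEN conjunct1]
    and dj = H[THEN conjunct2, THEN conjunct2, THEN conjunct2, THEN conjunct1]
    and ind0 = H[THEN conjunct2, THEN conjunct2, THEN conjunct2, THEN conjunct2]
  define S where "S = phi ` B4_vertices \<union> (\<Union>e\<in>B4_edges. set (P e))"
  have ind: "\<And>x y. x \<in> S \<Longrightarrow> y \<in> S \<Longrightarrow> E x y \<longleftrightarrow> (\<exists>e\<in>B4_edges. path_adj (P e) x y)"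
    using ind0 unfolding S_def Let_def by blast
  have pe: "\<forall>e\<in>B4_edges. distinct (P e) \<and> 2 \<le> length (P e) \<and> hd (P e) = phi (fst e) \<and> last (P e) = phi (snd e)
              \<and> set (butlast (tl (P e))) \<inter> phi ` B4_vertices = {}" using pe0 by auto
  have sv: "set (P e) \<subseteq> V" if "e \<in> B4_edges" for e using pe0 that by auto
  have EF: "(0,2) \<in> B4_edges" "(2,3) \<in> B4_edges" "(3,4) \<in> B4_edges" "(4,1) \<in> B4_edges"
    "(0,5) \<in> B4_edges" "(5,6) \<in> B4_edges" "(6,7) \<in> B4_edges" "(7,1) \<in> B4_edges"
    "(0,8) \<in> B4_edges" "(8,9) \<in> B4_edges" "(9,10) \<in> B4_edges" "(10,1) \<in> B4_edges"
    unfolding B4_edges_def by auto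
  have VF: "0 \<in> B4_vertices" "1 \<in> B4_vertices" "2 \<in> B4_vertices" "3 \<in> B4_vertices" "4 \<in> B4_vertices"
    "5 \<in> B4_vertices" "6 \<in> B4_vertices" "7 \<in> B4_vertices" "8 \<in> B4_vertices" "9 \<in> B4_vertices" "10 \<in> B4_vertices"
    unfolding B4_vertices_def by auto
  define L0 where "L0 = cat (cat (cat (P (0,2)) (P (2,3))) (P (3,4))) (P (4,1))"
  define L1 where "L1 = cat (cat (cat (P (0,5)) (P (5,6))) (P (6,7))) (P (7,1))"
  define L2 where "L2 = cat (cat (cat (P (0,8)) (P (8,9))) (P (9,10))) (P (10,1))"
  have d0: "distinct [0::nat,2,3,4,1]" "distinct [0::nat,5,6,7,1]" "distinct [0::nat,8,9,10,1]" by simp_all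
  note R0 = path_of[OF inj pe dj EF(1-4) VF(1) VF(3) VF(4) VF(5) VF(2) d0(1), folded L0_def]
  note R1 = path_of[OF inj pe dj EF(5-8) VF(1) VF(6) VF(7) VF(8) VF(2) d0(2), folded L1_def]
  note R2 = path_of[OF inj pe dj EF(9-12) VF(1) VF(9) VF(10) VF(11) VF(2) d0(3), folded L2_def]
  define Ls where "Ls = (\<lambda>j::nat. [L0, L1, L2] ! j)"
  have Ls: "Ls 0 = L0" "Ls 1 = L1" "Ls 2 = L2" unfolding Ls_def by simp_all
  define U where "U = (\<Union>j<3. set (Ls j))"
  have l3: "{..<3::nat} = {0,1,2}" by auto
  have U3: "U = set L0 \<union> set L1 \<union> set L2" unfolding U_def l3 using Ls by auto
  have bt: "set (butlast (tl xs)) \<subseteq> set xs" for xs :: "'a list"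
    by (cases xs) (auto dest: in_set_butlastD)
  have sub0: "set L0 \<subseteq> S"
  proof -
    have "phi ` {0,2,3,4,1} \<subseteq> S" using VF unfolding S_def by auto
    moreover have "set (butlast (tl (P e))) \<subseteq> S" if "e \<in> B4_edges" for e
      using bt[of "P e"] that unfolding S_def by blast
    ultimately show ?thesis unfolding R0(5) using EF by blast
  qed
  have sub1: "set L1 \<subseteq> S"
  proof -
    have "phi ` {0,5,6,7,1} \<subseteq> S" using VF unfolding S_def by auto
    moreover have "set (butlast (tl (P e))) \<subseteq> S" if "e \<in> B4_edges" for e
      using bt[of "P e"] that unfolding S_def by blast
    ultimately show ?thesis unfolding R1(5) using EF by blast
  qed
  have sub2: "set L2 \<subseteq> S"
  proof -
    have "phi ` {0,8,9,10,1} \<subseteq> S" using VF unfolding S_def by auto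
    moreover have "set (butlast (tl (P e))) \<subseteq> S" if "e \<in> B4_edges" for e
      using bt[of "P e"] that unfolding S_def by blast
    ultimately show ?thesis unfolding R2(5) using EF by blast
  qed
  have US: "U \<subseteq> S" using U3 sub0 sub1 sub2 by auto
  have SV: "S \<subseteq> V" unfolding S_def using img sv by blast
  have bex: "(\<exists>e\<in>B4_edges. Q e) \<longleftrightarrow> Q (0,2) \<or> Q (2,3) \<or> Q (3,4) \<or> Q (4,1) \<or> Q (0,5) \<or> Q (5,6) \<or> Q (6,7) \<or> Q (7,1)
     \<or> Q (0,8) \<or> Q (8,9) \<or> Q (9,10) \<or> Q (10,1)" for Q unfolding B4_edges_def by simp
  have adj: "E x y = (\<exists>j<3. (x, y) \<in> cps (Ls j) \<or> (y, x) \<in> cps (Ls j))" if "x \<in> U" "y \<in> U" for x y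
  proof -
    have xs: "x \<in> S" "y \<in> S" using that US by auto
    have "E x y = (\<exists>e\<in>B4_edges. path_adj (P e) x y)" using ind[OF xs] .
    also have "\<dots> = (\<exists>e\<in>B4_edges. (x, y) \<in> cps (P e) \<or> (y, x) \<in> cps (P e))"
      unfolding path_adj_cps ..
    also have "\<dots> = (\<exists>j<3. (x, y) \<in> cps (Ls j) \<or> (y, x) \<in> cps (Ls j))"
      unfolding bex ex3 Ls R0(6) R1(6) R2(6) by blast
    finally show ?thesis .
  qed
  let ?I = "\<lambda>e. set (butlast (tl (P e)))"
  have Iphi: "\<forall>e\<in>B4_edges. ?I e \<inter> phi ` B4_vertices = {}" using pe by blast
  have sets: "set L0 = phi ` {0,2,3,4,1} \<union> (\<Union>e\<in>{(0,2),(2,3),(3,4),(4,1)}. ?I e)"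
    "set L1 = phi ` {0,5,6,7,1} \<union> (\<Union>e\<in>{(0,5),(5,6),(6,7),(7,1)}. ?I e)"
    "set L2 = phi ` {0,8,9,10,1} \<union> (\<Union>e\<in>{(0,8),(8,9),(9,10),(10,1)}. ?I e)"
    using R0(5) R1(5) R2(5) by simp_all
  have A: "{0::nat,2,3,4,1} \<subseteq> B4_vertices" "{0::nat,5,6,7,1} \<subseteq> B4_vertices" "{0::nat,8,9,10,1} \<subseteq> B4_vertices"
    unfolding B4_vertices_def by auto
  have Ed: "{(0::nat,2::nat),(2,3),(3,4),(4,1)} \<subseteq> B4_edges" "{(0::nat,5::nat),(5,6),(6,7),(7,1)} \<subseteq> B4_edges"
    "{(0::nat,8::nat),(8,9),(9,10),(10,1)} \<subseteq> B4_edges" unfolding B4_edges_def by auto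
  have i01: "set L0 \<inter> set L1 \<subseteq> {phi 0, phi 1}"
    using inter_gen[OF inj A(1) A(2) Ed(1) Ed(2) _ Iphi dj] unfolding sets by auto
  have i02: "set L0 \<inter> set L2 \<subseteq> {phi 0, phi 1}"
    using inter_gen[OF inj A(1) A(3) Ed(1) Ed(3) _ Iphi dj] unfolding sets by auto
  have i12: "set L1 \<inter> set L2 \<subseteq> {phi 0, phi 1}"
    using inter_gen[OF inj A(2) A(3) Ed(2) Ed(3) _ Iphi dj] unfolding sets by auto
  define r where "r = (\<lambda>x. int (card {y \<in> V. lt y x}))"
  have rd: "\<And>x. r x = int (card {y \<in> V. lt y x})" unfolding r_def by simp
  note RL = rank_lemma[OF assms(1) rd]
  have UV: "U \<subseteq> V" using US SV by auto
  have Lf: "distinct (Ls j) \<and> 5 \<le> length (Ls j) \<and> hd (Ls j) = phi 0 \<and> last (Ls j) = phi 1" if "j < 3" for j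
  proof -
    have "j = 0 \<or> j = 1 \<or> j = 2" using that by auto
    then show ?thesis using Ls R0(1-4) R1(1-4) R2(1-4) by auto
  qed
  have f1: "\<And>j. j < 3 \<Longrightarrow> distinct (Ls j)" and f2: "\<And>j. j < 3 \<Longrightarrow> 5 \<le> length (Ls j)"
    and f3: "\<And>j. j < 3 \<Longrightarrow> hd (Ls j) = phi 0" and f4: "\<And>j. j < 3 \<Longrightarrow> last (Ls j) = phi 1"
    using Lf by blast+
  have f5: "set (Ls j) \<inter> set (Ls j') \<subseteq> {phi 0, phi 1}" if "j < 3" "j' < 3" "j \<noteq> j'" for j j'
  proof -
    have "j = 0 \<or> j = 1 \<or> j = 2" "j' = 0 \<or> j' = 1 \<or> j' = 2" using that by auto
    then show ?thesis using that i01 i02 i12 Ls by auto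
  qed
  have f8: "x = y" if "x \<in> U" "y \<in> U" "r x = r y" for x y
    using RL(2) UV that by blast
  have f9: "E a b \<or> E a d \<or> E b c \<or> E c d"
    if abcd: "a \<in> U" "b \<in> U" "c \<in> U" "d \<in> U" "r a < r b" "r b < r c" "r c < r d" "E a c" "E b d" for a b c d
  proof -
    have V4: "a \<in> V" "b \<in> V" "c \<in> V" "d \<in> V" using abcd UV by auto
    have l: "lt a b" "lt b c" "lt c d" using RL(3) V4 abcd by blast+
    show "E a b \<or> E a d \<or> E b c \<or> E c d"
    proof (rule ccontr)
      assume n: "\<not> (E a b \<or> E a d \<or> E b c \<or> E c d)"
      have "\<exists>a b c d. a \<in> V \<and> b \<in> V \<and> c \<in> V \<and> d \<in> V \<and> lt a b \<and> lt b c \<and> lt c d \<and>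
          E a c \<and> E b d \<and> \<not> E a b \<and> \<not> E a d \<and> \<not> E b c \<and> \<not> E c d"
        by (intro exI[of _ a] exI[of _ b] exI[of _ c] exI[of _ d]) (use V4 l abcd n in simp)
      then show False using assms(2) unfolding X_free_def by (elim notE)
    qed
  qed
  note th = theta_from_lists[where Ls=Ls and E=E and r=r and s="phi 0" and t="phi 1" and U=U,
     OF f1 f2 f3 f4 f5 U_def adj f8 f9]
  show False by (rule theta.contra[OF th])
qed

end
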